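(* Let $\mathcal{M}$ be a smooth manifold with a global frame $E_1,\dots,E_n$ and let $\rhd$ be the Weitzenböck connection $Y\rhd X=Y[x^i]E_i$ for $X=x^iE_i$. Assume that $\rhd$ has constant (parallel) torsion. Then $(\mathcal{C}^\infty(\mathcal{M}),\mathfrak{X}(\mathcal{M}),[-,-],\rho,\rhd,\tau)$ is an $\mathbb{R}$-tracial post-Lie-Rinehart algebra, where $[X,Y]=x^iy^j\llbracket E_i,E_j\rrbracket_J$, $\rho(X)(\phi)=X[\phi]$, and $\tau(u)=u^i_i$ for $u\in\mathrm{End}_{\mathcal{C}^\infty(\mathcal{M})}(\mathfrak{X}(\mathcal{M}))$ with $u(E_j)=u^i_jE_i$ (restricted to elementary endomorphisms).
   Context: Einstein summation is used. $\llbracket-,-\rrbracket_J$ is the Jacobi bracket of vector fields; $\llbracket X,Y\rrbracket_J=[X,Y]+X\rhd Y-Y\rhd X$, and $[X,Y]=-T(X,Y)$ where $T(X,Y)=X\rhd Y-Y\rhd X-\llbracket X,Y\rrbracket_J$. Convention for the tuple $(R,L,[-,-],\rho,\rhd,\tau)$: $R$ is a commutative algebra, $L$ an $R$-module, $[-,-]$ an $R$-bilinear Lie bracket, $\rho\colon L\to\mathrm{Der}(R)$ $R$-linear, $\rhd$ a connection ($\mathbb{R}$-bilinear, $R$-linear in the first argument, $X\rhd(fY)=\rho(X)(f)Y+fX\rhd Y$). It is a post-Lie-Rinehart algebra if $(R,L,\llbracket-,-\rrbracket,\rho)$ with $\llbracket X,Y\rrbracket=[X,Y]+X\rhd Y-Y\rhd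 X$ is a Lie-Rinehart algebra ($\rho$ a Lie morphism, $\llbracket X,fY\rrbracket=\rho(X)(f)Y+f\llbracket X,Y\rrbracket$) and $\rhd$ is flat ($\llbracket X,Y\rrbracket\rhd Z=X\rhd(Y\rhd Z)-Y\rhd(X\rhd Z)$) with parallel torsion ($X\rhd[Y,Z]=[X\rhd Y,Z]+[Y,X\rhd Z]$). For $X\in L$, $dX(Z)=Z\rhd X$, $\delta X(Z)=-[Z,X]$, $(\hat\nabla_X\nu)(Y)=X\rhd\nu(Y)-\nu(X\rhd Y)$; $\mathrm{El}_R(L)$ is the $R$-subalgebra of $\mathrm{End}_R(L)$ generated by all $\hat\nabla_{X_1}\cdots\hat\nabla_{X_m}dY$, $\hat\nabla_{X_1}\cdots\hat\nabla_{X_m}\delta Y$ ($m\ge0$). Tracial means there is an $R$-linear $\tau\colon\mathrm{El}_R(L)\to R$ with $\tau(\hat\nabla_X\nu)=\rho(X)(\tau(\nu))$ and $\tau(\nu\circ\mu)=\tau(\mu\circ\nu)$. *)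

theory Defs
  imports "HOL-Analysis.Analysis"
begin

text \<open>C^k on an open set, via iterated directional derivatives (the type stays fixed).\<close>
fun Ck_on :: "nat \<Rightarrow> 'a::euclidean_space set \<Rightarrow> ('a \<Rightarrow> 'b::real_normed_vector) \<Rightarrow> bool" where
  "Ck_on 0 U f = continuous_on U f"
| "Ck_on (Suc k) U f =
     (\<exists>D. (\<forall>x\<in>U. (f has_derivative D x) (at x)) \<and> (\<forall>v. Ck_on k U (\<lambda>x. D x v)))"

definition smooth_on :: "'a::euclidean_space set \<Rightarrow> ('a \<Rightarrow> 'b::real_normed_vector) \<Rightarrow> bool" where
  "smooth_on U f \<longleftrightarrow> open U \<and> (\<forall>k. Ck_on k U f)"

definition smooth_atlas :: "('m::topological_space set \<times> ('m \<Rightarrow> 'e::euclidean_space)) set \<Rightarrow> bool" where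
  "smooth_atlas A \<longleftrightarrow>
     (\<forall>(U,\<phi>)\<in>A. open U \<and> open (\<phi> ` U) \<and> homeomorphism U (\<phi> ` U) \<phi> (inv_into U \<phi>)) \<and>
     (\<Union>(fst ` A) = UNIV) \<and>
     (\<forall>(U,\<phi>)\<in>A. \<forall>(V,\<psi>)\<in>A. smooth_on (\<phi> ` (U \<inter> V)) (\<psi> \<circ> inv_into U \<phi>))"

definition smooth_funs :: "('m::topological_space set \<times> ('m \<Rightarrow> 'e::euclidean_space)) set \<Rightarrow> ('m \<Rightarrow> real) set" where
  "smooth_funs A = {f. \<forall>(U,\<phi>)\<in>A. smooth_on (\<phi> ` U) (f \<circ> inv_into U \<phi>)}"

type_synonym 'm vf = "('m \<Rightarrow> real) \<Rightarrow> ('m \<Rightarrow> real)"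

text \<open>Vector fields X(M) = derivations of C^\<infinity>(M) (extended by 0 outside C^\<infinity>(M)).\<close>
definition vector_fields :: "('m::topological_space set \<times> ('m \<Rightarrow> 'e::euclidean_space)) set \<Rightarrow> 'm vf set" where
  "vector_fields A = {X.
     (\<forall>f\<in>smooth_funs A. X f \<in> smooth_funs A) \<and>
     (\<forall>f\<in>smooth_funs A. \<forall>g\<in>smooth_funs A. X (\<lambda>x. f x + g x) = (\<lambda>x. X f x + X g x)) \<and>
     (\<forall>c. \<forall>f\<in>smooth_funs A. X (\<lambda>x. c * f x) = (\<lambda>x. c * X f x)) \<and>
     (\<forall>f\<in>smooth_funs A. \<forall>g\<in>smooth_funs A. X (\<lambda>x. f x * g x) = (\<lambda>x. f x * X g x + g x * X f x)) \<and>
     (\<forall>f. f \<notin> smooth_funs A \<longrightarrow> X f = (\<lambda>x. 0))}"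

definition vadd :: "'m vf \<Rightarrow> 'm vf \<Rightarrow> 'm vf" where
  "vadd X Y = (\<lambda>f x. X f x + Y f x)"
definition vzero :: "'m vf" where
  "vzero = (\<lambda>f x. 0)"
definition vsmul :: "('m \<Rightarrow> real) \<Rightarrow> 'm vf \<Rightarrow> 'm vf" where
  "vsmul g X = (\<lambda>f x. g x * X f x)"

definition jacobi_br :: "'m vf \<Rightarrow> 'm vf \<Rightarrow> 'm vf" where
  "jacobi_br X Y = (\<lambda>f x. X (Y f) x - Y (X f) x)"

definition frame_comb :: "(nat \<Rightarrow> 'm vf) \<Rightarrow> nat \<Rightarrow> (nat \<Rightarrow> 'm \<Rightarrow> real) \<Rightarrow> 'm vf" where
  "frame_comb E n x = (\<lambda>f p. \<Sum>i<n. x i p * E i f p)"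

text \<open>Global frame E_0,...,E_(n-1): a basis of X(M) as a C^\<infinity>(M)-module.\<close>
definition global_frame :: "('m::topological_space set \<times> ('m \<Rightarrow> 'e::euclidean_space)) set \<Rightarrow> (nat \<Rightarrow> 'm vf) \<Rightarrow> nat \<Rightarrow> bool" where
  "global_frame A E n \<longleftrightarrow>
     (\<forall>i<n. E i \<in> vector_fields A) \<and>
     (\<forall>X\<in>vector_fields A. \<exists>x. (\<forall>i<n. x i \<in> smooth_funs A) \<and> X = frame_comb E n x) \<and>
     (\<forall>x. (\<forall>i<n. x i \<in> smooth_funs A) \<and> frame_comb E n x = vzero \<longrightarrow> (\<forall>i<n. x i = (\<lambda>p. 0)))"

definition frame_coef :: "('m::topological_space set \<times> ('m \<Rightarrow> 'e::euclidean_space)) set \<Rightarrow> (nat \<Rightarrow> 'm vf) \<Rightarrow> nat \<Rightarrow> 'm vf \<Rightarrow> nat \<Rightarrow> 'm \<Rightarrow> real" where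
  "frame_coef A E n X = (SOME x. (\<forall>i<n. x i \<in> smooth_funs A) \<and> X = frame_comb E n x)"

definition weitz :: "('m::topological_space set \<times> ('m \<Rightarrow> 'e::euclidean_space)) set \<Rightarrow> (nat \<Rightarrow> 'm vf) \<Rightarrow> nat \<Rightarrow> 'm vf \<Rightarrow> 'm vf \<Rightarrow> 'm vf" where
  "weitz A E n Y X = frame_comb E n (\<lambda>i. Y (frame_coef A E n X i))"

definition torsion :: "('m vf \<Rightarrow> 'm vf \<Rightarrow> 'm vf) \<Rightarrow> 'm vf \<Rightarrow> 'm vf \<Rightarrow> 'm vf" where
  "torsion tri X Y = (\<lambda>f x. tri X Y f x - tri Y X f x - jacobi_br X Y f x)"

definition frame_bracket :: "('m::topological_space set \<times> ('m \<Rightarrow> 'e::euclidean_space)) set \<Rightarrow> (nat \<Rightarrow> 'm vf) \<Rightarrow> nat \<Rightarrow> 'm vf \<Rightarrow> 'm vf \<Rightarrow> 'm vf" where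
  "frame_bracket A E n X Y =
     (\<lambda>f p. \<Sum>i<n. \<Sum>j<n. frame_coef A E n X i p * frame_coef A E n Y j p * jacobi_br (E i) (E j) f p)"

definition frame_trace :: "('m::topological_space set \<times> ('m \<Rightarrow> 'e::euclidean_space)) set \<Rightarrow> (nat \<Rightarrow> 'm vf) \<Rightarrow> nat \<Rightarrow> ('m vf \<Rightarrow> 'm vf) \<Rightarrow> 'm \<Rightarrow> real" where
  "frame_trace A E n u = (\<lambda>p. \<Sum>i<n. frame_coef A E n (u (E i)) i p)"

section \<open>Post-Lie-Rinehart algebras (R a subalgebra of real-valued functions, pointwise ops)\<close>

definition comm_R_algebra :: "('m \<Rightarrow> real) set \<Rightarrow> bool" where
  "comm_R_algebra Rs \<longleftrightarrow> (\<forall>c. (\<lambda>x. c) \<in> Rs) \<and>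
     (\<forall>f\<in>Rs. \<forall>g\<in>Rs. (\<lambda>x. f x + g x) \<in> Rs \<and> (\<lambda>x. f x * g x) \<in> Rs)"

definition R_module :: "('m \<Rightarrow> real) set \<Rightarrow> 'v set \<Rightarrow> ('v \<Rightarrow> 'v \<Rightarrow> 'v) \<Rightarrow> 'v \<Rightarrow> (('m \<Rightarrow> real) \<Rightarrow> 'v \<Rightarrow> 'v) \<Rightarrow> bool" where
  "R_module Rs Ls add zero smul \<longleftrightarrow>
     zero \<in> Ls \<and>
     (\<forall>X\<in>Ls. \<forall>Y\<in>Ls. add X Y \<in> Ls) \<and> (\<forall>f\<in>Rs. \<forall>X\<in>Ls. smul f X \<in> Ls) \<and>
     (\<forall>X\<in>Ls. \<forall>Y\<in>Ls. \<forall>Z\<in>Ls. add (add X Y) Z = add X (add Y Z)) \<and>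
     (\<forall>X\<in>Ls. \<forall>Y\<in>Ls. add X Y = add Y X) \<and>
     (\<forall>X\<in>Ls. add X zero = X) \<and>
     (\<forall>X\<in>Ls. add X (smul (\<lambda>x. -1) X) = zero) \<and>
     (\<forall>f\<in>Rs. \<forall>g\<in>Rs. \<forall>X\<in>Ls. smul (\<lambda>x. f x + g x) X = add (smul f X) (smul g X)) \<and>
     (\<forall>f\<in>Rs. \<forall>X\<in>Ls. \<forall>Y\<in>Ls. smul f (add X Y) = add (smul f X) (smul f Y)) \<and>
     (\<forall>f\<in>Rs. \<forall>g\<in>Rs. \<forall>X\<in>Ls. smul (\<lambda>x. f x * g x) X = smul f (smul g X)) \<and>
     (\<forall>X\<in>Ls. smul (\<lambda>x. 1) X = X)"

text \<open>Lie bracket on Ls which is bilinear over the scalars S (S = R or S = constants)\<close>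
definition lie_bracket_over :: "('m \<Rightarrow> real) set \<Rightarrow> 'v set \<Rightarrow> ('v \<Rightarrow> 'v \<Rightarrow> 'v) \<Rightarrow> 'v \<Rightarrow> (('m \<Rightarrow> real) \<Rightarrow> 'v \<Rightarrow> 'v) \<Rightarrow> ('v \<Rightarrow> 'v \<Rightarrow> 'v) \<Rightarrow> bool" where
  "lie_bracket_over S Ls add zero smul br \<longleftrightarrow>
     (\<forall>X\<in>Ls. \<forall>Y\<in>Ls. br X Y \<in> Ls) \<and>
     (\<forall>X\<in>Ls. \<forall>X'\<in>Ls. \<forall>Y\<in>Ls. br (add X X') Y = add (br X Y) (br X' Y)) \<and>
     (\<forall>X\<in>Ls. \<forall>Y\<in>Ls. \<forall>Y'\<in>Ls. br X (add Y Y') = add (br X Y) (br X Y')) \<and>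
     (\<forall>f\<in>S. \<forall>X\<in>Ls. \<forall>Y\<in>Ls. br (smul f X) Y = smul f (br X Y) \<and> br X (smul f Y) = smul f (br X Y)) \<and>
     (\<forall>X\<in>Ls. br X X = zero) \<and>
     (\<forall>X\<in>Ls. \<forall>Y\<in>Ls. \<forall>Z\<in>Ls. add (br X (br Y Z)) (add (br Y (br Z X)) (br Z (br X Y))) = zero)"

definition const_funs :: "('m \<Rightarrow> real) set" where
  "const_funs = {f. \<exists>c. f = (\<lambda>x. c)}"

definition is_derivation :: "('m \<Rightarrow> real) set \<Rightarrow> (('m \<Rightarrow> real) \<Rightarrow> ('m \<Rightarrow> real)) \<Rightarrow> bool" where
  "is_derivation Rs D \<longleftrightarrow>
     (\<forall>f\<in>Rs. D f \<in> Rs) \<and>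
     (\<forall>f\<in>Rs. \<forall>g\<in>Rs. D (\<lambda>x. f x + g x) = (\<lambda>x. D f x + D g x)) \<and>
     (\<forall>c. \<forall>f\<in>Rs. D (\<lambda>x. c * f x) = (\<lambda>x. c * D f x)) \<and>
     (\<forall>f\<in>Rs. \<forall>g\<in>Rs. D (\<lambda>x. f x * g x) = (\<lambda>x. f x * D g x + g x * D f x))"

definition anchor :: "('m \<Rightarrow> real) set \<Rightarrow> 'v set \<Rightarrow> ('v \<Rightarrow> 'v \<Rightarrow> 'v) \<Rightarrow> (('m \<Rightarrow> real) \<Rightarrow> 'v \<Rightarrow> 'v) \<Rightarrow> ('v \<Rightarrow> ('m \<Rightarrow> real) \<Rightarrow> ('m \<Rightarrow> real)) \<Rightarrow> bool" where
  "anchor Rs Ls add smul rho \<longleftrightarrow>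
     (\<forall>X\<in>Ls. is_derivation Rs (rho X)) \<and>
     (\<forall>X\<in>Ls. \<forall>Y\<in>Ls. \<forall>\<phi>\<in>Rs. rho (add X Y) \<phi> = (\<lambda>x. rho X \<phi> x + rho Y \<phi> x)) \<and>
     (\<forall>f\<in>Rs. \<forall>X\<in>Ls. \<forall>\<phi>\<in>Rs. rho (smul f X) \<phi> = (\<lambda>x. f x * rho X \<phi> x))"

definition connection :: "('m \<Rightarrow> real) set \<Rightarrow> 'v set \<Rightarrow> ('v \<Rightarrow> 'v \<Rightarrow> 'v) \<Rightarrow> (('m \<Rightarrow> real) \<Rightarrow> 'v \<Rightarrow> 'v) \<Rightarrow> ('v \<Rightarrow> ('m \<Rightarrow> real) \<Rightarrow> ('m \<Rightarrow> real)) \<Rightarrow> ('v \<Rightarrow> 'v \<Rightarrow> 'v) \<Rightarrow> bool" where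
  "connection Rs Ls add smul rho tri \<longleftrightarrow>
     (\<forall>X\<in>Ls. \<forall>Y\<in>Ls. tri X Y \<in> Ls) \<and>
     (\<forall>X\<in>Ls. \<forall>X'\<in>Ls. \<forall>Y\<in>Ls. tri (add X X') Y = add (tri X Y) (tri X' Y)) \<and>
     (\<forall>f\<in>Rs. \<forall>X\<in>Ls. \<forall>Y\<in>Ls. tri (smul f X) Y = smul f (tri X Y)) \<and>
     (\<forall>X\<in>Ls. \<forall>Y\<in>Ls. \<forall>Y'\<in>Ls. tri X (add Y Y') = add (tri X Y) (tri X Y')) \<and>
     (\<forall>c. \<forall>X\<in>Ls. \<forall>Y\<in>Ls. tri X (smul (\<lambda>x. c) Y) = smul (\<lambda>x. c) (tri X Y)) \<and>
     (\<forall>f\<in>Rs. \<forall>X\<in>Ls. \<forall>Y\<in>Ls. tri X (smul f Y) = add (smul (rho X f) Y) (smul f (tri X Y)))"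

definition Lie_Rinehart :: "('m \<Rightarrow> real) set \<Rightarrow> 'v set \<Rightarrow> ('v \<Rightarrow> 'v \<Rightarrow> 'v) \<Rightarrow> 'v \<Rightarrow> (('m \<Rightarrow> real) \<Rightarrow> 'v \<Rightarrow> 'v) \<Rightarrow> ('v \<Rightarrow> 'v \<Rightarrow> 'v) \<Rightarrow> ('v \<Rightarrow> ('m \<Rightarrow> real) \<Rightarrow> ('m \<Rightarrow> real)) \<Rightarrow> bool" where
  "Lie_Rinehart Rs Ls add zero smul jb rho \<longleftrightarrow>
     comm_R_algebra Rs \<and> R_module Rs Ls add zero smul \<and>
     lie_bracket_over const_funs Ls add zero smul jb \<and>
     anchor Rs Ls add smul rho \<and>
     (\<forall>X\<in>Ls. \<forall>Y\<in>Ls. \<forall>\<phi>\<in>Rs. rho (jb X Y) \<phi> = (\<lambda>x. rho X (rho Y \<phi>) x - rho Y (rho X \<phi>) x)) \<and>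
     (\<forall>f\<in>Rs. \<forall>X\<in>Ls. \<forall>Y\<in>Ls. jb X (smul f Y) = add (smul (rho X f) Y) (smul f (jb X Y)))"

definition post_Lie_Rinehart :: "('m \<Rightarrow> real) set \<Rightarrow> 'v set \<Rightarrow> ('v \<Rightarrow> 'v \<Rightarrow> 'v) \<Rightarrow> 'v \<Rightarrow> (('m \<Rightarrow> real) \<Rightarrow> 'v \<Rightarrow> 'v) \<Rightarrow> ('v \<Rightarrow> 'v \<Rightarrow> 'v) \<Rightarrow> ('v \<Rightarrow> ('m \<Rightarrow> real) \<Rightarrow> ('m \<Rightarrow> real)) \<Rightarrow> ('v \<Rightarrow> 'v \<Rightarrow> 'v) \<Rightarrow> bool" where
  "post_Lie_Rinehart Rs Ls add zero smul br rho tri \<longleftrightarrow>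
     (let neg = smul (\<lambda>x. -1);
          jb = (\<lambda>X Y. add (br X Y) (add (tri X Y) (neg (tri Y X))))
      in comm_R_algebra Rs \<and> R_module Rs Ls add zero smul \<and>
         lie_bracket_over Rs Ls add zero smul br \<and>
         anchor Rs Ls add smul rho \<and>
         connection Rs Ls add smul rho tri \<and>
         Lie_Rinehart Rs Ls add zero smul jb rho \<and>
         (\<forall>X\<in>Ls. \<forall>Y\<in>Ls. \<forall>Z\<in>Ls. tri (jb X Y) Z = add (tri X (tri Y Z)) (neg (tri Y (tri X Z)))) \<and>
         (\<forall>X\<in>Ls. \<forall>Y\<in>Ls. \<forall>Z\<in>Ls. tri X (br Y Z) = add (br (tri X Y) Z) (br Y (tri X Z))))"

definition hat_nabla :: "('v \<Rightarrow> 'v \<Rightarrow> 'v) \<Rightarrow> (('m \<Rightarrow> real) \<Rightarrow> 'v \<Rightarrow> 'v) \<Rightarrow> ('v \<Rightarrow> 'v \<Rightarrow> 'v) \<Rightarrow> 'v \<Rightarrow> ('v \<Rightarrow> 'v) \<Rightarrow> ('v \<Rightarrow> 'v)" where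
  "hat_nabla add smul tri X \<nu> = (\<lambda>Y. add (tri X (\<nu> Y)) (smul (\<lambda>x. -1) (\<nu> (tri X Y))))"

inductive_set El :: "('m \<Rightarrow> real) set \<Rightarrow> 'v set \<Rightarrow> ('v \<Rightarrow> 'v \<Rightarrow> 'v) \<Rightarrow> (('m \<Rightarrow> real) \<Rightarrow> 'v \<Rightarrow> 'v) \<Rightarrow> ('v \<Rightarrow> 'v \<Rightarrow> 'v) \<Rightarrow> ('v \<Rightarrow> 'v \<Rightarrow> 'v) \<Rightarrow> ('v \<Rightarrow> 'v) set"
  for Rs Ls add smul br tri where
  El_d: "set Xs \<subseteq> Ls \<Longrightarrow> Y \<in> Ls \<Longrightarrow>
     foldr (hat_nabla add smul tri) Xs (\<lambda>Z. tri Z Y) \<in> El Rs Ls add smul br tri"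
| El_delta: "set Xs \<subseteq> Ls \<Longrightarrow> Y \<in> Ls \<Longrightarrow>
     foldr (hat_nabla add smul tri) Xs (\<lambda>Z. smul (\<lambda>x. -1) (br Z Y)) \<in> El Rs Ls add smul br tri"
| El_one: "id \<in> El Rs Ls add smul br tri"
| El_smul: "f \<in> Rs \<Longrightarrow> u \<in> El Rs Ls add smul br tri \<Longrightarrow> (\<lambda>Z. smul f (u Z)) \<in> El Rs Ls add smul br tri"
| El_add: "u \<in> El Rs Ls add smul br tri \<Longrightarrow> w \<in> El Rs Ls add smul br tri \<Longrightarrow>
     (\<lambda>Z. add (u Z) (w Z)) \<in> El Rs Ls add smul br tri"
| El_comp: "u \<in> El Rs Ls add smul br tri \<Longrightarrow> w \<in> El Rs Ls add smul br tri \<Longrightarrow>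
     u \<circ> w \<in> El Rs Ls add smul br tri"

definition tracial :: "('m \<Rightarrow> real) set \<Rightarrow> 'v set \<Rightarrow> ('v \<Rightarrow> 'v \<Rightarrow> 'v) \<Rightarrow> (('m \<Rightarrow> real) \<Rightarrow> 'v \<Rightarrow> 'v) \<Rightarrow> ('v \<Rightarrow> 'v \<Rightarrow> 'v) \<Rightarrow> ('v \<Rightarrow> ('m \<Rightarrow> real) \<Rightarrow> ('m \<Rightarrow> real)) \<Rightarrow> ('v \<Rightarrow> 'v \<Rightarrow> 'v) \<Rightarrow> (('v \<Rightarrow> 'v) \<Rightarrow> ('m \<Rightarrow> real)) \<Rightarrow> bool" where
  "tracial Rs Ls add smul br rho tri \<tau> \<longleftrightarrow>
     (let EL = El Rs Ls add smul br tri in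
       (\<forall>\<nu>\<in>EL. \<tau> \<nu> \<in> Rs) \<and>
       (\<forall>f\<in>Rs. \<forall>g\<in>Rs. \<forall>\<nu>\<in>EL. \<forall>\<mu>\<in>EL.
          \<tau> (\<lambda>Z. add (smul f (\<nu> Z)) (smul g (\<mu> Z))) = (\<lambda>x. f x * \<tau> \<nu> x + g x * \<tau> \<mu> x)) \<and>
       (\<forall>X\<in>Ls. \<forall>\<nu>\<in>EL. \<tau> (hat_nabla add smul tri X \<nu>) = rho X (\<tau> \<nu>)) \<and>
       (\<forall>\<nu>\<in>EL. \<forall>\<mu>\<in>EL. \<tau> (\<nu> \<circ> \<mu>) = \<tau> (\<mu> \<circ> \<nu>)))"

end

theory Submission
  imports Defs
begin

lemma Ck_const: "Ck_on k U (\<lambda>x. c)"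
proof (induction k arbitrary: c)
  case 0 then show ?case by (simp add: continuous_on_const)
next
  case (Suc k)
  show ?case by (auto intro!: exI[of _ "\<lambda>x v. 0"] Suc)
qed

lemma Ck_add: "Ck_on k U f \<Longrightarrow> Ck_on k U g \<Longrightarrow> Ck_on k U (\<lambda>x. f x + g x)"
proof (induction k arbitrary: f g)
  case 0 then show ?case by (simp add: continuous_on_add)
next
  case (Suc k)
  from Suc.prems obtain Df Dg where f: "\<forall>x\<in>U. (f has_derivative Df x) (at x)" "\<forall>v. Ck_on k U (\<lambda>x. Df x v)"
    and g: "\<forall>x\<in>U. (g has_derivative Dg x) (at x)" "\<forall>v. Ck_on k U (\<lambda>x. Dg x v)" by auto
  show ?case
  proof (simp only: Ck_on.simps, intro exI conjI ballI allI)
    fix x assume "x \<in> U"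
    then show "((\<lambda>x. f x + g x) has_derivative (\<lambda>v. Df x v + Dg x v)) (at x)"
      using f(1) g(1) by (intro has_derivative_add) auto
  next
    fix v show "Ck_on k U (\<lambda>x. Df x v + Dg x v)"
      by (intro Suc.IH f(2)[rule_format] g(2)[rule_format])
  qed
qed

lemma Ck_down: "Ck_on (Suc k) U f \<Longrightarrow> Ck_on k U f"
proof (induction k arbitrary: f)
  case 0
  then obtain D where "\<forall>x\<in>U. (f has_derivative D x) (at x)" by auto
  then show ?case
    unfolding Ck_on.simps by (meson continuous_at_imp_continuous_on has_derivative_continuous)
next
  case (Suc k)
  from Suc.prems obtain D where D: "\<forall>x\<in>U. (f has_derivative D x) (at x)" "\<forall>v. Ck_on (Suc k) U (\<lambda>x. D x v)"
    by (simp only: Ck_on.simps) blast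
  have "\<forall>v. Ck_on k U (\<lambda>x. D x v)" using D(2) Suc.IH by blast
  then show ?case using D(1) by (simp only: Ck_on.simps) blast
qed

lemma Ck_mult: "Ck_on k U f \<Longrightarrow> Ck_on k U g \<Longrightarrow> Ck_on k U (\<lambda>x. f x * g x :: real)"
proof (induction k arbitrary: f g)
  case 0 then show ?case by (simp add: continuous_on_mult)
next
  case (Suc k)
  from Suc.prems obtain Df Dg where f: "\<forall>x\<in>U. (f has_derivative Df x) (at x)" "\<forall>v. Ck_on k U (\<lambda>x. Df x v)"
    and g: "\<forall>x\<in>U. (g has_derivative Dg x) (at x)" "\<forall>v. Ck_on k U (\<lambda>x. Dg x v)" by auto
  have fk: "Ck_on k U f" "Ck_on k U g" using Suc.prems Ck_down by blast+
  show ?case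
  proof (simp only: Ck_on.simps, intro exI conjI ballI allI)
    fix x assume "x \<in> U"
    then show "((\<lambda>x. f x * g x) has_derivative (\<lambda>v. f x * Dg x v + Df x v * g x)) (at x)"
      using f(1) g(1) by (intro has_derivative_mult) auto
  next
    fix v show "Ck_on k U (\<lambda>x. f x * Dg x v + Df x v * g x)"
      by (intro Ck_add Suc.IH fk f(2)[rule_format] g(2)[rule_format])
  qed
qed


locale fr =
  fixes A :: "('m::topological_space set \<times> ('m \<Rightarrow> 'e::euclidean_space)) set"
    and E :: "nat \<Rightarrow> 'm vf" and n :: nat
  assumes atlas: "smooth_atlas A"
    and frame: "global_frame A E n"
begin

abbreviation "R \<equiv> smooth_funs A"
abbreviation "L \<equiv> vector_fields A"
abbreviation "coef \<equiv> frame_coef A E n"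
abbreviation "comb \<equiv> frame_comb E n"

lemma open_chart: "(U,\<phi>) \<in> A \<Longrightarrow> open (\<phi> ` U)"
  using atlas unfolding smooth_atlas_def by auto

lemma R_const[simp,intro]: "(\<lambda>x. c) \<in> R"
  unfolding smooth_funs_def smooth_on_def using open_chart by (auto simp: o_def Ck_const)

lemma R_add[intro]: assumes "f \<in> R" "g \<in> R" shows "(\<lambda>x. f x + g x) \<in> R"
  unfolding smooth_funs_def
proof (safe)
  fix U \<phi> assume u: "(U,\<phi>) \<in> A"
  have "smooth_on (\<phi> ` U) (f \<circ> inv_into U \<phi>)" "smooth_on (\<phi> ` U) (g \<circ> inv_into U \<phi>)"
    using assms u unfolding smooth_funs_def by auto
  then show "smooth_on (\<phi> ` U) ((\<lambda>x. f x + g x) \<circ> inv_into U \<phi>)"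
    unfolding smooth_on_def o_def using Ck_add by blast
qed

lemma R_mult[intro]: assumes "f \<in> R" "g \<in> R" shows "(\<lambda>x. f x * g x) \<in> R"
  unfolding smooth_funs_def
proof (safe)
  fix U \<phi> assume u: "(U,\<phi>) \<in> A"
  have "smooth_on (\<phi> ` U) (f \<circ> inv_into U \<phi>)" "smooth_on (\<phi> ` U) (g \<circ> inv_into U \<phi>)"
    using assms u unfolding smooth_funs_def by auto
  then show "smooth_on (\<phi> ` U) ((\<lambda>x. f x * g x) \<circ> inv_into U \<phi>)"
    unfolding smooth_on_def o_def using Ck_mult by blast
qed

lemma R_cmult[intro]: "f \<in> R \<Longrightarrow> (\<lambda>x. c * f x) \<in> R"
  using R_mult[OF R_const] by blast

lemma R_minus[intro]: "f \<in> R \<Longrightarrow> (\<lambda>x. - f x) \<in> R"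
  using R_cmult[of f "-1"] by simp

lemma R_diff[intro]: "f \<in> R \<Longrightarrow> g \<in> R \<Longrightarrow> (\<lambda>x. f x - g x) \<in> R"
proof -
  assume "f \<in> R" "g \<in> R"
  then have "(\<lambda>x. f x + - g x) \<in> R" by (intro R_add R_minus)
  then show ?thesis by simp
qed

lemma R_sum[intro]: assumes "finite S" shows "(\<And>i. i \<in> S \<Longrightarrow> f i \<in> R) \<Longrightarrow> (\<lambda>x. \<Sum>i\<in>S. f i x) \<in> R"
  using assms
proof (induction S rule: finite_induct)
  case empty then show ?case by simp
next
  case (insert a S)
  then have "(\<lambda>x. f a x + (\<Sum>i\<in>S. f i x)) \<in> R" by (intro R_add) auto
  then show ?case using insert by simp
qed

lemma R_sum_lt[intro]: "(\<And>i. i < (k::nat) \<Longrightarrow> f i \<in> R) \<Longrightarrow> (\<lambda>x. \<Sum>i<k. f i x) \<in> R"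
  by (intro R_sum finite_lessThan) simp

lemma comm_R: "comm_R_algebra R"
  unfolding comm_R_algebra_def by auto

lemma vfD:
  assumes "X \<in> L"
  shows vf_R': "f \<in> R \<Longrightarrow> X f \<in> R"
    and vf_add: "f \<in> R \<Longrightarrow> g \<in> R \<Longrightarrow> X (\<lambda>x. f x + g x) = (\<lambda>x. X f x + X g x)"
    and vf_cmult: "f \<in> R \<Longrightarrow> X (\<lambda>x. c * f x) = (\<lambda>x. c * X f x)"
    and vf_mult: "f \<in> R \<Longrightarrow> g \<in> R \<Longrightarrow> X (\<lambda>x. f x * g x) = (\<lambda>x. f x * X g x + g x * X f x)"
    and vf_nonsmooth: "f \<notin> R \<Longrightarrow> X f = (\<lambda>x. 0)"
  using assms unfolding vector_fields_def by auto

lemma vf_R[intro]: "X \<in> L \<Longrightarrow> X f \<in> R"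
  by (cases "f \<in> R") (auto simp: vf_R' vf_nonsmooth)

lemma vf_zero[simp]: "X \<in> L \<Longrightarrow> X (\<lambda>x. 0) = (\<lambda>x. 0)"
  using vf_cmult[of X "\<lambda>x. 0" 0] by simp

lemma vf_one: "X \<in> L \<Longrightarrow> X (\<lambda>x. 1) = (\<lambda>x. 0)"
proof -
  assume X: "X \<in> L"
  have "X (\<lambda>x. 1 * 1) = (\<lambda>x. 1 * X (\<lambda>x. 1) x + 1 * X (\<lambda>x. 1) x)"
    by (rule vf_mult[OF X]) auto
  then have "\<And>x. X (\<lambda>x. 1) x = X (\<lambda>x. 1) x + X (\<lambda>x. 1) x" by (metis mult_1)
  then show ?thesis by (auto simp: fun_eq_iff)
qed

lemma vf_const[simp]: "X \<in> L \<Longrightarrow> X (\<lambda>x. c) = (\<lambda>x. 0)"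
  using vf_cmult[of X "\<lambda>x. 1" c] vf_one[of X] by simp

lemma vf_minus: "X \<in> L \<Longrightarrow> f \<in> R \<Longrightarrow> X (\<lambda>x. - f x) = (\<lambda>x. - X f x)"
  using vf_cmult[of X f "-1"] by simp

lemma vf_diff: "X \<in> L \<Longrightarrow> f \<in> R \<Longrightarrow> g \<in> R \<Longrightarrow> X (\<lambda>x. f x - g x) = (\<lambda>x. X f x - X g x)"
proof -
  assume X: "X \<in> L" and f: "f \<in> R" and g: "g \<in> R"
  have "X (\<lambda>x. f x + - g x) = (\<lambda>x. X f x + X (\<lambda>x. - g x) x)" using X f g by (intro vf_add) auto
  then show ?thesis using vf_minus[OF X g] by simp
qed

lemma vf_sum: assumes X: "X \<in> L" and fin: "finite S" shows "(\<And>i. i \<in> S \<Longrightarrow> f i \<in> R) \<Longrightarrow>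
   X (\<lambda>x. \<Sum>i\<in>S. f i x) = (\<lambda>x. \<Sum>i\<in>S. X (f i) x)"
  using fin
proof (induction S rule: finite_induct)
  case empty then show ?case using X by simp
next
  case (insert a S)
  have "X (\<lambda>x. \<Sum>i\<in>insert a S. f i x) = X (\<lambda>x. f a x + (\<Sum>i\<in>S. f i x))"
    using insert by simp
  also have "\<dots> = (\<lambda>x. X (f a) x + X (\<lambda>x. \<Sum>i\<in>S. f i x) x)"
    using insert by (intro vf_add X) auto
  finally show ?case using insert by simp
qed

lemma vf_sum_lt: assumes X: "X \<in> L" and f: "\<And>i. i < (k::nat) \<Longrightarrow> f i \<in> R" shows
   "X (\<lambda>x. \<Sum>i<k. f i x) = (\<lambda>x. \<Sum>i<k. X (f i) x)"
  by (rule vf_sum[OF X finite_lessThan]) (use f in auto)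

lemma L_I:
  assumes "\<And>f. X f \<in> R"
    and "\<And>f g. f \<in> R \<Longrightarrow> g \<in> R \<Longrightarrow> X (\<lambda>x. f x + g x) = (\<lambda>x. X f x + X g x)"
    and "\<And>c f. f \<in> R \<Longrightarrow> X (\<lambda>x. c * f x) = (\<lambda>x. c * X f x)"
    and "\<And>f g. f \<in> R \<Longrightarrow> g \<in> R \<Longrightarrow> X (\<lambda>x. f x * g x) = (\<lambda>x. f x * X g x + g x * X f x)"
    and "\<And>f. f \<notin> R \<Longrightarrow> X f = (\<lambda>x. 0)"
  shows "X \<in> L"
  using assms unfolding vector_fields_def by auto

lemma vzero_L[simp,intro]: "vzero \<in> L"
  by (rule L_I) (auto simp: vzero_def)

lemma vadd_L[intro]: "X \<in> L \<Longrightarrow> Y \<in> L \<Longrightarrow> vadd X Y \<in> L"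
  by (rule L_I) (auto simp: vadd_def vf_add vf_cmult vf_mult vf_nonsmooth algebra_simps)

lemma vsmul_L[intro]: "h \<in> R \<Longrightarrow> X \<in> L \<Longrightarrow> vsmul h X \<in> L"
  by (rule L_I) (auto simp: vsmul_def vf_add vf_cmult vf_mult vf_nonsmooth algebra_simps)

lemma jacobi_br_L[intro]: assumes X: "X \<in> L" and Y: "Y \<in> L" shows "jacobi_br X Y \<in> L"
proof (rule L_I)
  fix f show "jacobi_br X Y f \<in> R" unfolding jacobi_br_def using X Y by auto
next
  fix f g assume "f \<in> R" "g \<in> R"
  then show "jacobi_br X Y (\<lambda>x. f x + g x) = (\<lambda>x. jacobi_br X Y f x + jacobi_br X Y g x)"
    unfolding jacobi_br_def using X Y by (auto simp: vf_add vf_R)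
next
  fix c f assume "f \<in> R"
  then show "jacobi_br X Y (\<lambda>x. c * f x) = (\<lambda>x. c * jacobi_br X Y f x)"
    unfolding jacobi_br_def using X Y by (auto simp: vf_cmult vf_R algebra_simps)
next
  fix f g assume f: "f \<in> R" and g: "g \<in> R"
  have "X (Y (\<lambda>x. f x * g x)) = X (\<lambda>x. f x * Y g x + g x * Y f x)"
    using f g Y by (simp add: vf_mult)
  also have "\<dots> = (\<lambda>x. X (\<lambda>x. f x * Y g x) x + X (\<lambda>x. g x * Y f x) x)"
    using f g X Y by (intro vf_add) (auto intro: R_mult vf_R)
  also have "\<dots> = (\<lambda>x. (f x * X (Y g) x + Y g x * X f x) + (g x * X (Y f) x + Y f x * X g x))"
    using f g X Y by (simp add: vf_mult vf_R)
  finally have 1: "X (Y (\<lambda>x. f x * g x)) = \<dots>" .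
  have "Y (X (\<lambda>x. f x * g x)) = Y (\<lambda>x. f x * X g x + g x * X f x)"
    using f g X by (simp add: vf_mult)
  also have "\<dots> = (\<lambda>x. Y (\<lambda>x. f x * X g x) x + Y (\<lambda>x. g x * X f x) x)"
    using f g X Y by (intro vf_add) (auto intro: R_mult vf_R)
  also have "\<dots> = (\<lambda>x. (f x * Y (X g) x + X g x * Y f x) + (g x * Y (X f) x + X f x * Y g x))"
    using f g X Y by (simp add: vf_mult vf_R)
  finally have 2: "Y (X (\<lambda>x. f x * g x)) = \<dots>" .
  show "jacobi_br X Y (\<lambda>x. f x * g x) = (\<lambda>x. f x * jacobi_br X Y g x + g x * jacobi_br X Y f x)"
    unfolding jacobi_br_def 1 2 by (auto simp: algebra_simps)
next
  fix f assume "f \<notin> R"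
  then show "jacobi_br X Y f = (\<lambda>x. 0)" unfolding jacobi_br_def using X Y by (simp add: vf_nonsmooth)
qed

lemma E_L[intro]: "i < n \<Longrightarrow> E i \<in> L"
  using frame unfolding global_frame_def by auto

lemma comb_L[intro]: assumes x: "\<And>i. i < n \<Longrightarrow> x i \<in> R" shows "comb x \<in> L"
proof (rule L_I)
  fix f show "comb x f \<in> R" unfolding frame_comb_def using x by (intro R_sum_lt R_mult) auto
next
  fix f g assume "f \<in> R" "g \<in> R"
  then have h: "\<And>i. i < n \<Longrightarrow> E i (\<lambda>x. f x + g x) = (\<lambda>x. E i f x + E i g x)"
    by (intro vf_add E_L) auto
  show "comb x (\<lambda>x. f x + g x) = (\<lambda>y. comb x f y + comb x g y)"
    unfolding frame_comb_def
  proof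
    fix y
    have "(\<Sum>i<n. x i y * E i (\<lambda>x. f x + g x) y) = (\<Sum>i<n. x i y * E i f y + x i y * E i g y)"
      by (rule sum.cong) (auto simp: h distrib_left)
    then show "(\<Sum>i<n. x i y * E i (\<lambda>x. f x + g x) y) = (\<Sum>i<n. x i y * E i f y) + (\<Sum>i<n. x i y * E i g y)"
      by (simp add: sum.distrib)
  qed
next
  fix c f assume "f \<in> R"
  then have h: "\<And>i. i < n \<Longrightarrow> E i (\<lambda>x. c * f x) = (\<lambda>x. c * E i f x)"
    by (intro vf_cmult E_L) auto
  show "comb x (\<lambda>x. c * f x) = (\<lambda>y. c * comb x f y)"
    unfolding frame_comb_def
  proof
    fix y
    have "(\<Sum>i<n. x i y * E i (\<lambda>x. c * f x) y) = (\<Sum>i<n. c * (x i y * E i f y))"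
      by (rule sum.cong) (auto simp: h)
    then show "(\<Sum>i<n. x i y * E i (\<lambda>x. c * f x) y) = c * (\<Sum>i<n. x i y * E i f y)"
      by (simp add: sum_distrib_left)
  qed
next
  fix f g assume "f \<in> R" "g \<in> R"
  then have h: "\<And>i. i < n \<Longrightarrow> E i (\<lambda>x. f x * g x) = (\<lambda>x. f x * E i g x + g x * E i f x)"
    by (intro vf_mult E_L) auto
  show "comb x (\<lambda>x. f x * g x) = (\<lambda>y. f y * comb x g y + g y * comb x f y)"
    unfolding frame_comb_def
  proof
    fix y
    have "(\<Sum>i<n. x i y * E i (\<lambda>x. f x * g x) y) = (\<Sum>i<n. f y * (x i y * E i g y) + g y * (x i y * E i f y))"
      by (rule sum.cong) (auto simp: h algebra_simps)
    then show "(\<Sum>i<n. x i y * E i (\<lambda>x. f x * g x) y) = f y * (\<Sum>i<n. x i y * E i g y) + g y * (\<Sum>i<n. x i y * E i f y)"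
      by (simp add: sum.distrib sum_distrib_left)
  qed
next
  fix f assume "f \<notin> R"
  then show "comb x f = (\<lambda>x. 0)"
    unfolding frame_comb_def by (intro ext sum.neutral) (auto simp: vf_nonsmooth E_L)
qed

end

context fr begin

lemma coef_spec: assumes "X \<in> L" shows "(\<forall>i<n. coef X i \<in> R) \<and> X = comb (coef X)"
proof -
  have "\<exists>x. (\<forall>i<n. x i \<in> R) \<and> X = comb x" using frame assms unfolding global_frame_def by blast
  then show ?thesis unfolding frame_coef_def by (rule someI_ex)
qed

lemma coef_R[intro]: "X \<in> L \<Longrightarrow> i < n \<Longrightarrow> coef X i \<in> R"
  using coef_spec by blast

lemma comb_coef: "X \<in> L \<Longrightarrow> comb (coef X) = X"
  using coef_spec by metis

lemma comb_cong: "(\<And>i. i < n \<Longrightarrow> x i = y i) \<Longrightarrow> comb x = comb y"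
  unfolding frame_comb_def by (intro ext sum.cong) auto

lemma frame_indep: "(\<forall>i<n. x i \<in> R) \<Longrightarrow> comb x = vzero \<Longrightarrow> (\<forall>i<n. x i = (\<lambda>p. 0))"
  using frame unfolding global_frame_def by blast

lemma comb_inj:
  assumes x: "\<And>i. i < n \<Longrightarrow> x i \<in> R" and y: "\<And>i. i < n \<Longrightarrow> y i \<in> R"
    and eq: "comb x = comb y" and i: "i < n"
  shows "x i = y i"
proof -
  have "comb (\<lambda>i p. x i p - y i p) = vzero"
  proof (intro ext)
    fix f p
    have "comb x f p = comb y f p" using eq by simp
    then show "comb (\<lambda>i p. x i p - y i p) f p = vzero f p"
      unfolding frame_comb_def vzero_def by (simp add: left_diff_distrib sum_subtractf)
  qed
  moreover have "\<forall>i<n. (\<lambda>p. x i p - y i p) \<in> R" using x y R_diff by blast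
  ultimately have "\<forall>i<n. (\<lambda>p. x i p - y i p) = (\<lambda>p. 0)"
    using frame_indep[of "\<lambda>i p. x i p - y i p"] by blast
  then show ?thesis using i by (auto simp: fun_eq_iff)
qed

lemma coef_comb: assumes x: "\<And>i. i < n \<Longrightarrow> x i \<in> R" and i: "i < n" shows "coef (comb x) i = x i"
proof -
  have L: "comb x \<in> L" using x by auto
  show ?thesis by (rule comb_inj[OF _ x _ i]) (use coef_spec[OF L] in auto)
qed

lemma L_eq: assumes "X \<in> L" "Y \<in> L" "\<And>i. i < n \<Longrightarrow> coef X i = coef Y i" shows "X = Y"
  using comb_coef[OF assms(1)] comb_coef[OF assms(2)] comb_cong[of "coef X" "coef Y"] assms(3) by metis

lemma vzero_comb: "vzero = comb (\<lambda>i p. 0)"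
  unfolding vzero_def frame_comb_def by simp

lemma coef_vzero[simp]: "i < n \<Longrightarrow> coef vzero i = (\<lambda>p. 0)"
  unfolding vzero_comb by (rule coef_comb) auto

lemma vadd_comb: "vadd (comb x) (comb y) = comb (\<lambda>i p. x i p + y i p)"
  unfolding vadd_def frame_comb_def by (simp add: distrib_right sum.distrib)

lemma coef_vadd[simp]: assumes "X \<in> L" "Y \<in> L" "i < n"
  shows "coef (vadd X Y) i = (\<lambda>p. coef X i p + coef Y i p)"
proof -
  have "vadd X Y = comb (\<lambda>i p. coef X i p + coef Y i p)"
    using vadd_comb comb_coef assms by metis
  then show ?thesis using assms by (simp add: coef_comb R_add coef_R)
qed

lemma vsmul_comb: "vsmul h (comb y) = comb (\<lambda>i p. h p * y i p)"
  unfolding vsmul_def frame_comb_def by (simp add: sum_distrib_left mult.assoc)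

lemma coef_vsmul[simp]: assumes "h \<in> R" "X \<in> L" "i < n"
  shows "coef (vsmul h X) i = (\<lambda>p. h p * coef X i p)"
proof -
  have "vsmul h X = comb (\<lambda>i p. h p * coef X i p)"
    using vsmul_comb comb_coef assms by metis
  then show ?thesis using assms by (simp add: coef_comb R_mult coef_R)
qed

lemma E_comb: assumes "k < n" shows "E k = comb (\<lambda>i p. if i = k then 1 else 0)"
proof (intro ext)
  fix f p
  have "(\<Sum>i<n. (if i = k then 1 else 0) * E i f p) = (\<Sum>i<n. if i = k then E i f p else 0)"
    by (rule sum.cong) auto
  then show "E k f p = comb (\<lambda>i p. if i = k then 1 else 0) f p"
    unfolding frame_comb_def using assms by simp
qed

lemma coef_E[simp]: "k < n \<Longrightarrow> i < n \<Longrightarrow> coef (E k) i = (\<lambda>p. if i = k then 1 else 0)"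
  by (subst E_comb, assumption, rule coef_comb) auto

lemma weitz_comb: "weitz A E n Y X = comb (\<lambda>i. Y (coef X i))"
  unfolding weitz_def ..

lemma weitz_L[intro]: "Y \<in> L \<Longrightarrow> weitz A E n Y X \<in> L"
  unfolding weitz_comb by (intro comb_L vf_R)

lemma coef_weitz[simp]: "Y \<in> L \<Longrightarrow> i < n \<Longrightarrow> coef (weitz A E n Y X) i = Y (coef X i)"
  unfolding weitz_comb by (rule coef_comb) auto

definition "cc i j = coef (jacobi_br (E i) (E j))"

lemma cc_R[intro]: "i < n \<Longrightarrow> j < n \<Longrightarrow> m < n \<Longrightarrow> cc i j m \<in> R"
  unfolding cc_def by (intro coef_R jacobi_br_L E_L)

lemma jacobi_E: "i < n \<Longrightarrow> j < n \<Longrightarrow> jacobi_br (E i) (E j) = comb (cc i j)"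
  unfolding cc_def by (rule comb_coef[symmetric]) auto

lemma sum3_swap: "(\<Sum>i<n. \<Sum>j<n. \<Sum>m<n. F i j m) = (\<Sum>m<n. \<Sum>i<n. \<Sum>j<n. (F i j m :: real))"
proof -
  have "(\<Sum>i<n. \<Sum>j<n. \<Sum>m<n. F i j m) = (\<Sum>i<n. \<Sum>m<n. \<Sum>j<n. F i j m)"
    by (rule sum.cong[OF refl], rule sum.swap)
  also have "\<dots> = (\<Sum>m<n. \<Sum>i<n. \<Sum>j<n. F i j m)" by (rule sum.swap)
  finally show ?thesis .
qed

lemma sum3: "(\<Sum>i<n. \<Sum>j<n. a i j * (\<Sum>m<n. b i j m * e m)) = (\<Sum>m<n. (\<Sum>i<n. \<Sum>j<n. a i j * b i j m) * (e m :: real))"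
proof -
  have "(\<Sum>i<n. \<Sum>j<n. a i j * (\<Sum>m<n. b i j m * e m)) = (\<Sum>i<n. \<Sum>j<n. \<Sum>m<n. a i j * b i j m * e m)"
    by (simp add: sum_distrib_left mult.assoc)
  also have "\<dots> = (\<Sum>m<n. \<Sum>i<n. \<Sum>j<n. a i j * b i j m * e m)" by (rule sum3_swap)
  also have "\<dots> = (\<Sum>m<n. (\<Sum>i<n. \<Sum>j<n. a i j * b i j m) * e m)"
    by (simp add: sum_distrib_right)
  finally show ?thesis .
qed

lemma bracket_comb: assumes "X \<in> L" "Y \<in> L"
  shows "frame_bracket A E n X Y = comb (\<lambda>m p. \<Sum>i<n. \<Sum>j<n. coef X i p * coef Y j p * cc i j m p)"
proof (intro ext)
  fix f p
  have "frame_bracket A E n X Y f p = (\<Sum>i<n. \<Sum>j<n. coef X i p * coef Y j p * (\<Sum>m<n. cc i j m p * E m f p))"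
    unfolding frame_bracket_def by (intro sum.cong refl) (simp add: jacobi_E frame_comb_def)
  also have "\<dots> = (\<Sum>m<n. (\<Sum>i<n. \<Sum>j<n. coef X i p * coef Y j p * cc i j m p) * E m f p)"
    by (rule sum3)
  finally show "frame_bracket A E n X Y f p = comb (\<lambda>m p. \<Sum>i<n. \<Sum>j<n. coef X i p * coef Y j p * cc i j m p) f p"
    unfolding frame_comb_def .
qed

lemma bracket_L[intro]: "X \<in> L \<Longrightarrow> Y \<in> L \<Longrightarrow> frame_bracket A E n X Y \<in> L"
  by (subst bracket_comb) (auto intro!: comb_L R_sum_lt R_mult)

lemma coef_bracket[simp]: "X \<in> L \<Longrightarrow> Y \<in> L \<Longrightarrow> m < n \<Longrightarrow>
  coef (frame_bracket A E n X Y) m = (\<lambda>p. \<Sum>i<n. \<Sum>j<n. coef X i p * coef Y j p * cc i j m p)"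
  by (subst bracket_comb) (auto intro!: coef_comb R_sum_lt R_mult)

end

context fr begin

lemma apply_comb: "X \<in> L \<Longrightarrow> X f = (\<lambda>p. \<Sum>i<n. coef X i p * E i f p)"
  by (subst comb_coef[symmetric], assumption) (simp add: frame_comb_def)

lemma vf_sum_mult: assumes X: "X \<in> L" and a: "\<And>j. j < n \<Longrightarrow> a j \<in> R" and b: "\<And>j. j < n \<Longrightarrow> b j \<in> R"
  shows "X (\<lambda>p. \<Sum>j<n. a j p * b j p) = (\<lambda>p. \<Sum>j<n. a j p * X (b j) p + b j p * X (a j) p)"
proof -
  have "X (\<lambda>p. \<Sum>j<n. a j p * b j p) = (\<lambda>p. \<Sum>j<n. X (\<lambda>p. a j p * b j p) p)"
    using a b by (intro vf_sum_lt X R_mult) auto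
  also have "\<dots> = (\<lambda>p. \<Sum>j<n. a j p * X (b j) p + b j p * X (a j) p)"
  proof (intro ext sum.cong refl)
    fix p j assume "j \<in> {..<n}"
    then show "X (\<lambda>p. a j p * b j p) p = a j p * X (b j) p + b j p * X (a j) p"
      using a b vf_mult[OF X, of "a j" "b j"] by auto
  qed
  finally show ?thesis .
qed

lemma jacobi_comb: assumes X: "X \<in> L" and Y: "Y \<in> L"
  shows "jacobi_br X Y = comb (\<lambda>m p. X (coef Y m) p - Y (coef X m) p + (\<Sum>i<n. \<Sum>j<n. coef X i p * coef Y j p * cc i j m p))"
    (is "_ = comb ?c")
proof (intro ext)
  fix f p
  have cR: "\<And>m. m < n \<Longrightarrow> ?c m \<in> R"
    using X Y by (intro R_add R_diff vf_R[OF X] vf_R[OF Y] R_sum_lt R_mult coef_R cc_R) auto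
  show "jacobi_br X Y f p = comb ?c f p"
  proof (cases "f \<in> R")
    case False
    have "jacobi_br X Y f = (\<lambda>p. 0)" by (rule vf_nonsmooth[OF jacobi_br_L[OF X Y] False])
    moreover have "comb ?c f = (\<lambda>p. 0)" by (rule vf_nonsmooth[OF comb_L[OF cR] False])
    ultimately show ?thesis by simp
  next
    case True
    define x where "x = coef X"
    define y where "y = coef Y"
    have xR: "\<And>i. i < n \<Longrightarrow> x i \<in> R" and yR: "\<And>i. i < n \<Longrightarrow> y i \<in> R"
      unfolding x_def y_def using X Y by auto
    have EfR: "\<And>i. i < n \<Longrightarrow> E i f \<in> R" using True by auto
    have Yf: "Y f = (\<lambda>p. \<Sum>j<n. y j p * E j f p)" unfolding y_def by (rule apply_comb[OF Y])
    have Xf: "X f = (\<lambda>p. \<Sum>j<n. x j p * E j f p)" unfolding x_def by (rule apply_comb[OF X])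
    have "X (Y f) p = (\<Sum>j<n. y j p * X (E j f) p + E j f p * X (y j) p)"
      unfolding Yf by (subst vf_sum_mult[OF X yR EfR]) auto
    also have "\<dots> = (\<Sum>j<n. y j p * (\<Sum>i<n. x i p * E i (E j f) p)) + (\<Sum>j<n. E j f p * X (y j) p)"
    proof -
      have "\<And>j. X (E j f) p = (\<Sum>i<n. x i p * E i (E j f) p)"
        unfolding x_def by (subst apply_comb[OF X]) (rule refl)
      then show ?thesis by (simp only: sum.distrib)
    qed
    also have "(\<Sum>j<n. y j p * (\<Sum>i<n. x i p * E i (E j f) p)) = (\<Sum>i<n. \<Sum>j<n. x i p * y j p * E i (E j f) p)"
    proof -
      have "(\<Sum>j<n. y j p * (\<Sum>i<n. x i p * E i (E j f) p)) = (\<Sum>j<n. \<Sum>i<n. x i p * y j p * E i (E j f) p)"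
        by (simp add: sum_distrib_left mult_ac)
      also have "\<dots> = (\<Sum>i<n. \<Sum>j<n. x i p * y j p * E i (E j f) p)" by (rule sum.swap)
      finally show ?thesis .
    qed
    finally have XY: "X (Y f) p = (\<Sum>i<n. \<Sum>j<n. x i p * y j p * E i (E j f) p) + (\<Sum>j<n. E j f p * X (y j) p)" .
    have "Y (X f) p = (\<Sum>j<n. x j p * Y (E j f) p + E j f p * Y (x j) p)"
      unfolding Xf by (subst vf_sum_mult[OF Y xR EfR]) auto
    also have "\<dots> = (\<Sum>i<n. x i p * (\<Sum>j<n. y j p * E j (E i f) p)) + (\<Sum>j<n. E j f p * Y (x j) p)"
    proof -
      have "\<And>j. Y (E j f) p = (\<Sum>i<n. y i p * E i (E j f) p)"
        unfolding y_def by (subst apply_comb[OF Y]) (rule refl)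
      then show ?thesis by (simp only: sum.distrib)
    qed
    also have "(\<Sum>i<n. x i p * (\<Sum>j<n. y j p * E j (E i f) p)) = (\<Sum>i<n. \<Sum>j<n. x i p * y j p * E j (E i f) p)"
      by (simp add: sum_distrib_left mult_ac)
    finally have YX: "Y (X f) p = (\<Sum>i<n. \<Sum>j<n. x i p * y j p * E j (E i f) p) + (\<Sum>j<n. E j f p * Y (x j) p)" .
    have "(\<Sum>i<n. \<Sum>j<n. x i p * y j p * E i (E j f) p) - (\<Sum>i<n. \<Sum>j<n. x i p * y j p * E j (E i f) p)
        = (\<Sum>i<n. \<Sum>j<n. x i p * y j p * (\<Sum>m<n. cc i j m p * E m f p))"
    proof -
      have "\<And>i j. i < n \<Longrightarrow> j < n \<Longrightarrow> E i (E j f) p - E j (E i f) p = (\<Sum>m<n. cc i j m p * E m f p)"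
      proof -
        fix i j assume "i < n" "j < n"
        then have "jacobi_br (E i) (E j) f p = comb (cc i j) f p" by (simp add: jacobi_E)
        then show "E i (E j f) p - E j (E i f) p = (\<Sum>m<n. cc i j m p * E m f p)"
          unfolding jacobi_br_def frame_comb_def .
      qed
      note h = this
      have h2: "x i p * y j p * E i (E j f) p - x i p * y j p * E j (E i f) p
           = x i p * y j p * (\<Sum>m<n. cc i j m p * E m f p)" if "i < n" "j < n" for i j
      proof -
        have "x i p * y j p * E i (E j f) p - x i p * y j p * E j (E i f) p
           = x i p * y j p * (E i (E j f) p - E j (E i f) p)" by (simp add: right_diff_distrib)
        also have "\<dots> = x i p * y j p * (\<Sum>m<n. cc i j m p * E m f p)" using h[OF that] by simp
        finally show ?thesis .
      qed
      have "(\<Sum>i<n. \<Sum>j<n. x i p * y j p * E i (E j f) p) - (\<Sum>i<n. \<Sum>j<n. x i p * y j p * E j (E i f) p)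
          = (\<Sum>i<n. \<Sum>j<n. x i p * y j p * E i (E j f) p - x i p * y j p * E j (E i f) p)"
        by (simp only: sum_subtractf)
      also have "\<dots> = (\<Sum>i<n. \<Sum>j<n. x i p * y j p * (\<Sum>m<n. cc i j m p * E m f p))"
        by (intro sum.cong refl) (simp add: h2)
      finally show ?thesis .
    qed
    also have "\<dots> = (\<Sum>m<n. (\<Sum>i<n. \<Sum>j<n. x i p * y j p * cc i j m p) * E m f p)"
      by (rule sum3)
    finally have D: "(\<Sum>i<n. \<Sum>j<n. x i p * y j p * E i (E j f) p) - (\<Sum>i<n. \<Sum>j<n. x i p * y j p * E j (E i f) p)
        = (\<Sum>m<n. (\<Sum>i<n. \<Sum>j<n. x i p * y j p * cc i j m p) * E m f p)" .
    have "jacobi_br X Y f p = X (Y f) p - Y (X f) p" unfolding jacobi_br_def ..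
    also have "\<dots> = (\<Sum>m<n. (\<Sum>i<n. \<Sum>j<n. x i p * y j p * cc i j m p) * E m f p)
       + (\<Sum>j<n. E j f p * X (y j) p) - (\<Sum>j<n. E j f p * Y (x j) p)"
      unfolding XY YX using D by simp
    also have "\<dots> = comb ?c f p"
      unfolding frame_comb_def x_def[symmetric] y_def[symmetric]
      by (simp add: ring_distribs sum.distrib sum_subtractf mult.commute)
    finally show ?thesis .
  qed
qed

lemma coef_jacobi[simp]: assumes X: "X \<in> L" and Y: "Y \<in> L" and m: "m < n"
  shows "coef (jacobi_br X Y) m = (\<lambda>p. X (coef Y m) p - Y (coef X m) p + (\<Sum>i<n. \<Sum>j<n. coef X i p * coef Y j p * cc i j m p))"
  unfolding jacobi_comb[OF X Y] using X Y m
  by (intro coef_comb R_add R_diff vf_R[OF X] vf_R[OF Y] R_sum_lt R_mult coef_R cc_R) auto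

end

lemma vadd_apply[simp]: "vadd X Y f x = X f x + Y f x" by (simp add: vadd_def)
lemma vsmul_apply[simp]: "vsmul g X f x = g x * X f x" by (simp add: vsmul_def)
lemma vzero_apply[simp]: "vzero f x = 0" by (simp add: vzero_def)
lemma jacobi_br_apply: "jacobi_br X Y f x = X (Y f) x - Y (X f) x" by (simp add: jacobi_br_def)

lemma swap3a: "(\<Sum>a<n. \<Sum>b<n. \<Sum>d<n. F a b d) = (\<Sum>d<n. \<Sum>a<n. \<Sum>b<(n::nat). (F a b d :: real))"
proof -
  have "(\<Sum>a<n. \<Sum>b<n. \<Sum>d<n. F a b d) = (\<Sum>a<n. \<Sum>d<n. \<Sum>b<n. F a b d)"
    by (rule sum.cong[OF refl], rule sum.swap)
  also have "\<dots> = (\<Sum>d<n. \<Sum>a<n. \<Sum>b<n. F a b d)" by (rule sum.swap)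
  finally show ?thesis .
qed

lemma swap3b: "(\<Sum>a<n. \<Sum>b<n. \<Sum>d<n. F a b d) = (\<Sum>b<n. \<Sum>d<n. \<Sum>a<(n::nat). (F a b d :: real))"
proof -
  have "(\<Sum>a<n. \<Sum>b<n. \<Sum>d<n. F a b d) = (\<Sum>b<n. \<Sum>a<n. \<Sum>d<n. F a b d)"
    by (rule sum.swap)
  also have "\<dots> = (\<Sum>b<n. \<Sum>d<n. \<Sum>a<n. F a b d)" by (rule sum.cong[OF refl], rule sum.swap)
  finally show ?thesis .
qed

definition "Bl n (c :: nat \<Rightarrow> nat \<Rightarrow> nat \<Rightarrow> real) u v m = (\<Sum>i<n. \<Sum>j<n. u i * v j * c i j m)"

lemma Bl_nested: "Bl n c u (\<lambda>j. Bl n c v w j) m = (\<Sum>a<n. \<Sum>b<n. \<Sum>d<n. u a * v b * w d * (\<Sum>j<n. c b d j * c a j m))"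
proof -
  have "Bl n c u (\<lambda>j. Bl n c v w j) m = (\<Sum>a<n. \<Sum>j<n. \<Sum>b<n. \<Sum>d<n. u a * v b * w d * (c b d j * c a j m))"
    unfolding Bl_def by (simp add: sum_distrib_left sum_distrib_right mult_ac)
  also have "\<dots> = (\<Sum>a<n. \<Sum>b<n. \<Sum>d<n. \<Sum>j<n. u a * v b * w d * (c b d j * c a j m))"
    by (rule sum.cong[OF refl], rule swap3a[symmetric])
  also have "\<dots> = (\<Sum>a<n. \<Sum>b<n. \<Sum>d<n. u a * v b * w d * (\<Sum>j<n. c b d j * c a j m))"
    by (simp add: sum_distrib_left)
  finally show ?thesis .
qed

lemma Bl_jacobi:
  assumes J: "\<And>i k l. i < n \<Longrightarrow> k < n \<Longrightarrow> l < n \<Longrightarrow>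
     (\<Sum>j<n. c k l j * c i j m) + (\<Sum>j<n. c l i j * c k j m) + (\<Sum>j<n. c i k j * c l j m) = 0"
  shows "Bl n c x (\<lambda>j. Bl n c y z j) m + Bl n c y (\<lambda>j. Bl n c z x j) m + Bl n c z (\<lambda>j. Bl n c x y j) m = 0"
proof -
  define K where "K b d a = (\<Sum>j<n. c b d j * c a j m)" for a b d
  have 1: "Bl n c x (\<lambda>j. Bl n c y z j) m = (\<Sum>i<n. \<Sum>k<n. \<Sum>l<n. x i * y k * z l * K k l i)"
    unfolding Bl_nested K_def ..
  have 2: "Bl n c y (\<lambda>j. Bl n c z x j) m = (\<Sum>i<n. \<Sum>k<n. \<Sum>l<n. x i * y k * z l * K l i k)"
    unfolding Bl_nested K_def by (subst swap3a) (simp add: mult_ac)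
  have 3: "Bl n c z (\<lambda>j. Bl n c x y j) m = (\<Sum>i<n. \<Sum>k<n. \<Sum>l<n. x i * y k * z l * K i k l)"
    unfolding Bl_nested K_def by (subst swap3b) (simp add: mult_ac)
  have "Bl n c x (\<lambda>j. Bl n c y z j) m + Bl n c y (\<lambda>j. Bl n c z x j) m + Bl n c z (\<lambda>j. Bl n c x y j) m
     = (\<Sum>i<n. \<Sum>k<n. \<Sum>l<n. x i * y k * z l * (K k l i + K l i k + K i k l))"
    unfolding 1 2 3 by (simp add: sum.distrib ring_distribs)
  also have "\<dots> = 0"
    by (intro sum.neutral ballI) (simp add: K_def J)
  finally show ?thesis .
qed

context fr begin

lemmas Lsimps = vadd_L vsmul_L vzero_L jacobi_br_L E_L weitz_L bracket_L vf_R coef_R cc_R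

lemma module: "R_module R L vadd vzero vsmul"
  unfolding R_module_def
  by (intro conjI ballI vzero_L vadd_L vsmul_L; simp add: fun_eq_iff algebra_simps)

lemma anchor: "anchor R L vadd vsmul (\<lambda>X \<phi>. X \<phi>)"
  unfolding anchor_def is_derivation_def
  by (auto simp: fun_eq_iff vf_add vf_cmult vf_mult vf_R)

lemma coef_eqI: "X \<in> L \<Longrightarrow> Y \<in> L \<Longrightarrow> (\<And>i p. i < n \<Longrightarrow> coef X i p = coef Y i p) \<Longrightarrow> X = Y"
  by (rule L_eq) (auto simp: fun_eq_iff)

lemma connection: "connection R L vadd vsmul (\<lambda>X \<phi>. X \<phi>) (weitz A E n)"
  unfolding connection_def
proof (intro conjI ballI allI)
  fix X Y assume "X \<in> L" "Y \<in> L"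
  then show "weitz A E n X Y \<in> L" by auto
next
  fix X X' Y assume L: "X \<in> L" "X' \<in> L" "Y \<in> L"
  show "weitz A E n (vadd X X') Y = vadd (weitz A E n X Y) (weitz A E n X' Y)"
    by (rule coef_eqI) (use L in \<open>auto simp: Lsimps\<close>)
next
  fix f X Y assume L: "f \<in> R" "X \<in> L" "Y \<in> L"
  show "weitz A E n (vsmul f X) Y = vsmul f (weitz A E n X Y)"
    by (rule coef_eqI) (use L in \<open>auto simp: Lsimps\<close>)
next
  fix X Y Y' assume L: "X \<in> L" "Y' \<in> L" "Y \<in> L"
  show "weitz A E n X (vadd Y Y') = vadd (weitz A E n X Y) (weitz A E n X Y')"
    by (rule coef_eqI) (use L in \<open>auto simp: Lsimps simp: vf_add\<close>)
next
  fix c X Y assume L: "X \<in> L" "Y \<in> L"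
  show "weitz A E n X (vsmul (\<lambda>x. c) Y) = vsmul (\<lambda>x. c) (weitz A E n X Y)"
    by (rule coef_eqI) (use L in \<open>auto simp: Lsimps simp: vf_cmult\<close>)
next
  fix f X Y assume L: "f \<in> R" "X \<in> L" "Y \<in> L"
  show "weitz A E n X (vsmul f Y) = vadd (vsmul (X f) Y) (vsmul f (weitz A E n X Y))"
    by (rule coef_eqI) (use L in \<open>auto simp: Lsimps simp: vf_mult\<close>)
qed

end

lemma Bl_cong: "(\<And>j. j < n \<Longrightarrow> v j = v' j) \<Longrightarrow> Bl n c u v m = Bl n c u v' m"
  unfolding Bl_def by (intro sum.cong refl) auto

lemma Bl_congl: "(\<And>i. i < n \<Longrightarrow> u i = u' i) \<Longrightarrow> Bl n c u v m = Bl n c u' v m"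
  unfolding Bl_def by (intro sum.cong refl) auto

lemma Bl_addl: "Bl n c (\<lambda>i. u i + u' i) v m = Bl n c u v m + Bl n c u' v m"
  unfolding Bl_def by (simp add: ring_distribs sum.distrib)

lemma Bl_addr: "Bl n c u (\<lambda>i. v i + v' i) m = Bl n c u v m + Bl n c u v' m"
  unfolding Bl_def by (simp add: ring_distribs sum.distrib)

lemma Bl_smull: "Bl n c (\<lambda>i. a * u i) v m = a * Bl n c u v m"
  unfolding Bl_def by (simp add: sum_distrib_left mult_ac)

lemma Bl_smulr: "Bl n c u (\<lambda>i. a * v i) m = a * Bl n c u v m"
  unfolding Bl_def by (simp add: sum_distrib_left mult_ac)

lemma Bl_alt: assumes anti: "\<And>i j. i < n \<Longrightarrow> j < n \<Longrightarrow> c j i m = - c i j m"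
  shows "Bl n c x x m = 0"
proof -
  have "Bl n c x x m = (\<Sum>j<n. \<Sum>i<n. x i * x j * c i j m)"
    unfolding Bl_def by (rule sum.swap[where g="\<lambda>i j. x i * x j * c i j m"])
  also have "\<dots> = (\<Sum>j<n. \<Sum>i<n. - (x j * x i * c j i m))"
  proof (intro sum.cong refl)
    fix i j assume "j \<in> {..<n}" "i \<in> {..<n}"
    then have "c j i m = - c i j m" by (intro anti) simp_all
    then show "x i * x j * c i j m = - (x j * x i * c j i m)" by simp
  qed
  also have "\<dots> = - Bl n c x x m"
    unfolding Bl_def by (simp add: sum_negf)
  finally show ?thesis by simp
qed

context fr begin

lemma jacobi_anti: "jacobi_br Y X = vsmul (\<lambda>x. -1) (jacobi_br X Y)"
  by (simp add: fun_eq_iff jacobi_br_apply)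

lemma cc_anti: assumes "i < n" "j < n" "m < n" shows "cc j i m p = - cc i j m p"
proof -
  have "cc j i m = coef (vsmul (\<lambda>x. -1) (jacobi_br (E i) (E j))) m"
    unfolding cc_def by (subst jacobi_anti) (rule refl)
  also have "\<dots> = (\<lambda>p. -1 * cc i j m p)"
    using assms by (subst coef_vsmul) (auto simp: cc_def)
  finally show ?thesis by simp
qed

lemma jacobi_identity: assumes "X \<in> L" "Y \<in> L" "Z \<in> L"
  shows "vadd (jacobi_br X (jacobi_br Y Z)) (vadd (jacobi_br Y (jacobi_br Z X)) (jacobi_br Z (jacobi_br X Y))) = vzero"
  using assms by (simp add: fun_eq_iff jacobi_br_def vf_diff vf_R)

definition "ccp p i j m = cc i j m p"

lemma coef_bracket_Bl: "X \<in> L \<Longrightarrow> Y \<in> L \<Longrightarrow> m < n \<Longrightarrow>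
  coef (frame_bracket A E n X Y) m p = Bl n (ccp p) (\<lambda>i. coef X i p) (\<lambda>j. coef Y j p) m"
  by (simp add: Bl_def ccp_def)

end

locale frc = fr +
  assumes cconst: "\<And>X i j m. X \<in> L \<Longrightarrow> i < n \<Longrightarrow> j < n \<Longrightarrow> m < n \<Longrightarrow> X (cc i j m) = (\<lambda>p. 0)"
begin

lemma coef_nested_E: assumes i: "i < n" and k: "k < n" and l: "l < n" and m: "m < n"
  shows "coef (jacobi_br (E i) (jacobi_br (E k) (E l))) m p = (\<Sum>b<n. cc k l b p * cc i b m p)"
proof -
  define W where "W = jacobi_br (E k) (E l)"
  have WL: "W \<in> L" unfolding W_def using k l by auto
  have cW: "coef W = cc k l" unfolding W_def cc_def ..
  have "coef (jacobi_br (E i) W) m p = E i (coef W m) p - W (coef (E i) m) p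
      + (\<Sum>a<n. \<Sum>b<n. coef (E i) a p * coef W b p * cc a b m p)"
    using coef_jacobi[OF E_L[OF i] WL m] by simp
  also have "E i (coef W m) p = 0" unfolding cW using cconst[OF E_L[OF i] k l m] by simp
  also have "W (coef (E i) m) p = 0" using coef_E[OF i m] vf_const[OF WL] by simp
  also have "(\<Sum>a<n. \<Sum>b<n. coef (E i) a p * coef W b p * cc a b m p) = (\<Sum>a<n. if a = i then (\<Sum>b<n. cc k l b p * cc i b m p) else 0)"
    by (intro sum.cong refl) (auto simp: cW coef_E[OF i])
  also have "\<dots> = (\<Sum>b<n. cc k l b p * cc i b m p)" using i by simp
  finally show ?thesis unfolding W_def by simp
qed

lemma cc_jacobi: assumes i: "i < n" and k: "k < n" and l: "l < n" and m: "m < n"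
  shows "(\<Sum>j<n. cc k l j p * cc i j m p) + (\<Sum>j<n. cc l i j p * cc k j m p) + (\<Sum>j<n. cc i k j p * cc l j m p) = 0"
proof -
  define P where "P = jacobi_br (E i) (jacobi_br (E k) (E l))"
  define Q where "Q = jacobi_br (E k) (jacobi_br (E l) (E i))"
  define S where "S = jacobi_br (E l) (jacobi_br (E i) (E k))"
  have PL: "P \<in> L" and QL: "Q \<in> L" and SL: "S \<in> L" unfolding P_def Q_def S_def using i k l by auto
  have "vadd P (vadd Q S) = vzero"
    unfolding P_def Q_def S_def by (rule jacobi_identity[OF E_L[OF i] E_L[OF k] E_L[OF l]])
  then have "coef (vadd P (vadd Q S)) m p = 0" using m by simp
  moreover have "coef (vadd P (vadd Q S)) m p = coef P m p + (coef Q m p + coef S m p)"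
    using coef_vadd[OF PL vadd_L[OF QL SL] m] coef_vadd[OF QL SL m] by simp
  moreover have "coef P m p = (\<Sum>j<n. cc k l j p * cc i j m p)" unfolding P_def by (rule coef_nested_E[OF i k l m])
  moreover have "coef Q m p = (\<Sum>j<n. cc l i j p * cc k j m p)" unfolding Q_def by (rule coef_nested_E[OF k l i m])
  moreover have "coef S m p = (\<Sum>j<n. cc i k j p * cc l j m p)" unfolding S_def by (rule coef_nested_E[OF l i k m])
  ultimately show ?thesis by (simp add: add.assoc)
qed

lemma lie_bracket: "lie_bracket_over R L vadd vzero vsmul (frame_bracket A E n)"
  unfolding lie_bracket_over_def
proof (intro conjI ballI allI)
  fix X Y assume "X \<in> L" "Y \<in> L" then show "frame_bracket A E n X Y \<in> L" by auto
next
  fix X X' Y assume L: "X \<in> L" "X' \<in> L" "Y \<in> L"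
  show "frame_bracket A E n (vadd X X') Y = vadd (frame_bracket A E n X Y) (frame_bracket A E n X' Y)"
  proof (rule coef_eqI)
    fix m p assume m: "m < n"
    have "coef (frame_bracket A E n (vadd X X') Y) m p = Bl n (ccp p) (\<lambda>i. coef (vadd X X') i p) (\<lambda>j. coef Y j p) m"
      using L m by (intro coef_bracket_Bl) auto
    also have "\<dots> = Bl n (ccp p) (\<lambda>i. coef X i p + coef X' i p) (\<lambda>j. coef Y j p) m"
      by (rule Bl_congl) (simp add: L)
    also have "\<dots> = coef (vadd (frame_bracket A E n X Y) (frame_bracket A E n X' Y)) m p"
      using L m by (simp del: coef_bracket add: Bl_addl coef_bracket_Bl Lsimps)
    finally show "coef (frame_bracket A E n (vadd X X') Y) m p = \<dots>" .
  qed (use L in auto)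
next
  fix X Y Y' assume L: "X \<in> L" "Y \<in> L" "Y' \<in> L"
  show "frame_bracket A E n X (vadd Y Y') = vadd (frame_bracket A E n X Y) (frame_bracket A E n X Y')"
  proof (rule coef_eqI)
    fix m p assume m: "m < n"
    have "coef (frame_bracket A E n X (vadd Y Y')) m p = Bl n (ccp p) (\<lambda>i. coef X i p) (\<lambda>j. coef (vadd Y Y') j p) m"
      using L m by (intro coef_bracket_Bl) auto
    also have "\<dots> = Bl n (ccp p) (\<lambda>i. coef X i p) (\<lambda>j. coef Y j p + coef Y' j p) m"
      by (rule Bl_cong) (simp add: L)
    also have "\<dots> = coef (vadd (frame_bracket A E n X Y) (frame_bracket A E n X Y')) m p"
      using L m by (simp del: coef_bracket add: Bl_addr coef_bracket_Bl Lsimps)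
    finally show "coef (frame_bracket A E n X (vadd Y Y')) m p = \<dots>" .
  qed (use L in auto)
next
  fix f X Y assume L: "f \<in> R" "X \<in> L" "Y \<in> L"
  show "frame_bracket A E n (vsmul f X) Y = vsmul f (frame_bracket A E n X Y)"
  proof (rule coef_eqI)
    fix m p assume m: "m < n"
    have "coef (frame_bracket A E n (vsmul f X) Y) m p = Bl n (ccp p) (\<lambda>i. coef (vsmul f X) i p) (\<lambda>j. coef Y j p) m"
      using L m by (intro coef_bracket_Bl) auto
    also have "\<dots> = Bl n (ccp p) (\<lambda>i. f p * coef X i p) (\<lambda>j. coef Y j p) m"
      by (rule Bl_congl) (simp add: L)
    also have "\<dots> = coef (vsmul f (frame_bracket A E n X Y)) m p"
      using L m by (simp del: coef_bracket add: Bl_smull coef_bracket_Bl Lsimps)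
    finally show "coef (frame_bracket A E n (vsmul f X) Y) m p = \<dots>" .
  qed (use L in auto)
  show "frame_bracket A E n X (vsmul f Y) = vsmul f (frame_bracket A E n X Y)"
  proof (rule coef_eqI)
    fix m p assume m: "m < n"
    have "coef (frame_bracket A E n X (vsmul f Y)) m p = Bl n (ccp p) (\<lambda>i. coef X i p) (\<lambda>j. coef (vsmul f Y) j p) m"
      using L m by (intro coef_bracket_Bl) auto
    also have "\<dots> = Bl n (ccp p) (\<lambda>i. coef X i p) (\<lambda>j. f p * coef Y j p) m"
      by (rule Bl_cong) (simp add: L)
    also have "\<dots> = coef (vsmul f (frame_bracket A E n X Y)) m p"
      using L m by (simp del: coef_bracket add: Bl_smulr coef_bracket_Bl Lsimps)
    finally show "coef (frame_bracket A E n X (vsmul f Y)) m p = \<dots>" .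
  qed (use L in auto)
next
  fix X assume L: "X \<in> L"
  show "frame_bracket A E n X X = vzero"
  proof (rule coef_eqI)
    fix i p assume i: "i < n"
    have "Bl n (ccp p) (\<lambda>i. coef X i p) (\<lambda>j. coef X j p) i = 0"
      by (rule Bl_alt) (simp only: ccp_def, rule cc_anti, simp_all add: i)
    then show "coef (frame_bracket A E n X X) i p = coef vzero i p"
      using L i by (simp del: coef_bracket add: coef_bracket_Bl)
  qed (use L in auto)
next
  fix X Y Z assume L: "X \<in> L" "Y \<in> L" "Z \<in> L"
  show "vadd (frame_bracket A E n X (frame_bracket A E n Y Z))
          (vadd (frame_bracket A E n Y (frame_bracket A E n Z X)) (frame_bracket A E n Z (frame_bracket A E n X Y))) = vzero"
  proof (rule coef_eqI)
    fix m p assume m: "m < n"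
    define x where "x = (\<lambda>i. coef X i p)"
    define y where "y = (\<lambda>i. coef Y i p)"
    define z where "z = (\<lambda>i. coef Z i p)"
    have e1: "coef (frame_bracket A E n X (frame_bracket A E n Y Z)) m p = Bl n (ccp p) x (\<lambda>j. Bl n (ccp p) y z j) m"
      using L m unfolding x_def y_def z_def
      by (subst coef_bracket_Bl) (auto intro!: Bl_cong simp del: coef_bracket simp: coef_bracket_Bl)
    have e2: "coef (frame_bracket A E n Y (frame_bracket A E n Z X)) m p = Bl n (ccp p) y (\<lambda>j. Bl n (ccp p) z x j) m"
      using L m unfolding x_def y_def z_def
      by (subst coef_bracket_Bl) (auto intro!: Bl_cong simp del: coef_bracket simp: coef_bracket_Bl)
    have e3: "coef (frame_bracket A E n Z (frame_bracket A E n X Y)) m p = Bl n (ccp p) z (\<lambda>j. Bl n (ccp p) x y j) m"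
      using L m unfolding x_def y_def z_def
      by (subst coef_bracket_Bl) (auto intro!: Bl_cong simp del: coef_bracket simp: coef_bracket_Bl)
    have "Bl n (ccp p) x (\<lambda>j. Bl n (ccp p) y z j) m + Bl n (ccp p) y (\<lambda>j. Bl n (ccp p) z x j) m
       + Bl n (ccp p) z (\<lambda>j. Bl n (ccp p) x y j) m = 0"
      by (rule Bl_jacobi) (simp add: ccp_def cc_jacobi m)
    then show "coef (vadd (frame_bracket A E n X (frame_bracket A E n Y Z))
          (vadd (frame_bracket A E n Y (frame_bracket A E n Z X)) (frame_bracket A E n Z (frame_bracket A E n X Y)))) m p = coef vzero m p"
      using L m by (simp del: coef_bracket add: Lsimps e1 e2 e3 add.assoc)
  qed (use L in auto)
qed

end

lemma LR_cong:
  assumes eq: "\<And>X Y. X \<in> Ls \<Longrightarrow> Y \<in> Ls \<Longrightarrow> jb X Y = jb' X Y"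
    and LR: "Lie_Rinehart Rs Ls add zero smul jb' rho"
  shows "Lie_Rinehart Rs Ls add zero smul jb rho"
proof -
  have M: "R_module Rs Ls add zero smul" and B: "lie_bracket_over const_funs Ls add zero smul jb'"
    using LR unfolding Lie_Rinehart_def by auto
  have cl: "\<And>X Y. X \<in> Ls \<Longrightarrow> Y \<in> Ls \<Longrightarrow> jb' X Y \<in> Ls" using B unfolding lie_bracket_over_def by auto
  have acl: "\<And>X Y. X \<in> Ls \<Longrightarrow> Y \<in> Ls \<Longrightarrow> add X Y \<in> Ls" and scl: "\<And>f X. f \<in> Rs \<Longrightarrow> X \<in> Ls \<Longrightarrow> smul f X \<in> Ls"
    using M unfolding R_module_def by auto
  have sc: "\<And>f X. f \<in> const_funs \<Longrightarrow> X \<in> Ls \<Longrightarrow> smul f X \<in> Ls"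
    using scl M unfolding R_module_def Lie_Rinehart_def comm_R_algebra_def const_funs_def
    using LR unfolding Lie_Rinehart_def comm_R_algebra_def by auto
  show ?thesis using LR unfolding Lie_Rinehart_def lie_bracket_over_def
    by (simp add: eq cl acl scl sc cong: ball_cong)
qed

context frc begin

lemma jb_eq: assumes "X \<in> L" "Y \<in> L"
  shows "vadd (frame_bracket A E n X Y) (vadd (weitz A E n X Y) (vsmul (\<lambda>x. -1) (weitz A E n Y X))) = jacobi_br X Y"
  by (rule coef_eqI) (use assms in \<open>auto simp: Lsimps\<close>)

lemma LR_jacobi: "Lie_Rinehart R L vadd vzero vsmul jacobi_br (\<lambda>X \<phi>. X \<phi>)"
  unfolding Lie_Rinehart_def
proof (intro conjI comm_R module anchor)
  show "lie_bracket_over const_funs L vadd vzero vsmul jacobi_br"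
    unfolding lie_bracket_over_def
  proof (intro conjI ballI)
    fix X Y assume "X \<in> L" "Y \<in> L" then show "jacobi_br X Y \<in> L" by auto
  next
    fix X X' Y assume L: "X \<in> L" "X' \<in> L" "Y \<in> L"
    then show "jacobi_br (vadd X X') Y = vadd (jacobi_br X Y) (jacobi_br X' Y)"
      by (simp add: fun_eq_iff jacobi_br_def vadd_def vf_add vf_R)
  next
    fix X Y Y' assume L: "X \<in> L" "Y \<in> L" "Y' \<in> L"
    then show "jacobi_br X (vadd Y Y') = vadd (jacobi_br X Y) (jacobi_br X Y')"
      by (simp add: fun_eq_iff jacobi_br_def vadd_def vf_add vf_R)
  next
    fix f :: "'a \<Rightarrow> real" and X Y assume f: "f \<in> const_funs" and L: "X \<in> L" "Y \<in> L"
    then obtain c where c: "f = (\<lambda>x. c)" unfolding const_funs_def by auto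
    show "jacobi_br (vsmul f X) Y = vsmul f (jacobi_br X Y)"
      using L unfolding c by (simp add: fun_eq_iff jacobi_br_def vsmul_def vf_cmult vf_R right_diff_distrib)
    show "jacobi_br X (vsmul f Y) = vsmul f (jacobi_br X Y)"
      using L unfolding c by (simp add: fun_eq_iff jacobi_br_def vsmul_def vf_cmult vf_R right_diff_distrib)
  next
    fix X assume "X \<in> L" then show "jacobi_br X X = vzero" by (simp add: fun_eq_iff jacobi_br_def)
  next
    fix X Y Z assume "X \<in> L" "Y \<in> L" "Z \<in> L"
    then show "vadd (jacobi_br X (jacobi_br Y Z)) (vadd (jacobi_br Y (jacobi_br Z X)) (jacobi_br Z (jacobi_br X Y))) = vzero"
      by (rule jacobi_identity)
  qed
next
  show "\<forall>X\<in>L. \<forall>Y\<in>L. \<forall>\<phi>\<in>R. jacobi_br X Y \<phi> = (\<lambda>x. X (Y \<phi>) x - Y (X \<phi>) x)"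
    by (simp add: jacobi_br_def)
next
  show "\<forall>f\<in>R. \<forall>X\<in>L. \<forall>Y\<in>L. jacobi_br X (vsmul f Y) = vadd (vsmul (X f) Y) (vsmul f (jacobi_br X Y))"
  proof (intro ballI ext)
    fix f X Y g p assume f: "f \<in> R" and X: "X \<in> L" and Y: "Y \<in> L"
    show "jacobi_br X (vsmul f Y) g p = vadd (vsmul (X f) Y) (vsmul f (jacobi_br X Y)) g p"
      using f X Y by (simp add: jacobi_br_def vsmul_def vf_mult vf_R vf_cmult algebra_simps)
  qed
qed

lemma flat: assumes "X \<in> L" "Y \<in> L" "Z \<in> L"
  shows "weitz A E n (jacobi_br X Y) Z = vadd (weitz A E n X (weitz A E n Y Z)) (vsmul (\<lambda>x. -1) (weitz A E n Y (weitz A E n X Z)))"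
  by (rule coef_eqI) (use assms in \<open>auto simp: Lsimps jacobi_br_apply\<close>)

lemma vf_triple: assumes X: "X \<in> L" and a: "a \<in> R" and b: "b \<in> R" and c: "c \<in> R" and Xc: "X c = (\<lambda>p. 0)"
  shows "X (\<lambda>p. a p * b p * c p) = (\<lambda>p. X a p * b p * c p + a p * X b p * c p)"
proof -
  have "X (\<lambda>p. a p * b p * c p) = (\<lambda>p. a p * b p * X c p + c p * X (\<lambda>p. a p * b p) p)"
    using vf_mult[OF X R_mult[OF a b] c] by simp
  also have "\<dots> = (\<lambda>p. X a p * b p * c p + a p * X b p * c p)"
    using vf_mult[OF X a b] Xc by (simp add: algebra_simps)
  finally show ?thesis .
qed

lemma parallel: assumes X: "X \<in> L" and Y: "Y \<in> L" and Z: "Z \<in> L"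
  shows "weitz A E n X (frame_bracket A E n Y Z) = vadd (frame_bracket A E n (weitz A E n X Y) Z) (frame_bracket A E n Y (weitz A E n X Z))"
proof (rule coef_eqI)
  fix m p assume m: "m < n"
  define y where "y = coef Y"
  define z where "z = coef Z"
  have yR: "\<And>i. i < n \<Longrightarrow> y i \<in> R" and zR: "\<And>i. i < n \<Longrightarrow> z i \<in> R" unfolding y_def z_def using Y Z by auto
  have "coef (weitz A E n X (frame_bracket A E n Y Z)) m = X (\<lambda>p. \<Sum>i<n. \<Sum>j<n. y i p * z j p * cc i j m p)"
    using X Y Z m unfolding y_def z_def by simp
  also have "\<dots> = (\<lambda>p. \<Sum>i<n. X (\<lambda>p. \<Sum>j<n. y i p * z j p * cc i j m p) p)"
    by (rule vf_sum_lt[OF X]) (use yR zR m in \<open>auto intro!: R_sum_lt R_mult cc_R\<close>)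
  also have "\<dots> = (\<lambda>p. \<Sum>i<n. \<Sum>j<n. X (\<lambda>p. y i p * z j p * cc i j m p) p)"
  proof (intro ext sum.cong refl)
    fix p i assume "i \<in> {..<n}"
    then show "X (\<lambda>p. \<Sum>j<n. y i p * z j p * cc i j m p) p = (\<Sum>j<n. X (\<lambda>p. y i p * z j p * cc i j m p) p)"
      by (subst vf_sum_lt[OF X]) (use yR zR m in \<open>auto intro!: R_mult cc_R\<close>)
  qed
  also have "\<dots> = (\<lambda>p. \<Sum>i<n. \<Sum>j<n. X (y i) p * z j p * cc i j m p + y i p * X (z j) p * cc i j m p)"
  proof (intro ext sum.cong refl)
    fix p i j assume "i \<in> {..<n}" "j \<in> {..<n}"
    then show "X (\<lambda>p. y i p * z j p * cc i j m p) p = X (y i) p * z j p * cc i j m p + y i p * X (z j) p * cc i j m p"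
      by (subst vf_triple[OF X]) (use yR zR m cconst[OF X] in auto)
  qed
  finally have lhs: "coef (weitz A E n X (frame_bracket A E n Y Z)) m p
     = Bl n (ccp p) (\<lambda>i. X (y i) p) (\<lambda>j. z j p) m + Bl n (ccp p) (\<lambda>i. y i p) (\<lambda>j. X (z j) p) m"
    unfolding Bl_def ccp_def by (simp add: sum.distrib)
  have r1: "coef (frame_bracket A E n (weitz A E n X Y) Z) m p = Bl n (ccp p) (\<lambda>i. X (y i) p) (\<lambda>j. z j p) m"
    using X Y Z m unfolding y_def z_def
    by (subst coef_bracket_Bl) (auto intro!: Bl_congl)
  have r2: "coef (frame_bracket A E n Y (weitz A E n X Z)) m p = Bl n (ccp p) (\<lambda>i. y i p) (\<lambda>j. X (z j) p) m"
    using X Y Z m unfolding y_def z_def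
    by (subst coef_bracket_Bl) (auto intro!: Bl_cong)
  show "coef (weitz A E n X (frame_bracket A E n Y Z)) m p =
        coef (vadd (frame_bracket A E n (weitz A E n X Y) Z) (frame_bracket A E n Y (weitz A E n X Z))) m p"
    using X Y Z m by (simp del: coef_bracket coef_weitz add: Lsimps lhs r1 r2)
qed (use assms in auto)

end

context frc begin

lemma weitz_addl: "X \<in> L \<Longrightarrow> X' \<in> L \<Longrightarrow> Y \<in> L \<Longrightarrow> weitz A E n (vadd X X') Y = vadd (weitz A E n X Y) (weitz A E n X' Y)"
  using connection unfolding connection_def by blast
lemma weitz_smull: "f \<in> R \<Longrightarrow> X \<in> L \<Longrightarrow> Y \<in> L \<Longrightarrow> weitz A E n (vsmul f X) Y = vsmul f (weitz A E n X Y)"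
  using connection unfolding connection_def by blast
lemma weitz_addr: "X \<in> L \<Longrightarrow> Y \<in> L \<Longrightarrow> Y' \<in> L \<Longrightarrow> weitz A E n X (vadd Y Y') = vadd (weitz A E n X Y) (weitz A E n X Y')"
  using connection unfolding connection_def by blast
lemma weitz_leib: "f \<in> R \<Longrightarrow> X \<in> L \<Longrightarrow> Y \<in> L \<Longrightarrow> weitz A E n X (vsmul f Y) = vadd (vsmul (X f) Y) (vsmul f (weitz A E n X Y))"
  using connection unfolding connection_def by blast
lemma br_addl: "X \<in> L \<Longrightarrow> X' \<in> L \<Longrightarrow> Y \<in> L \<Longrightarrow> frame_bracket A E n (vadd X X') Y = vadd (frame_bracket A E n X Y) (frame_bracket A E n X' Y)"
  using lie_bracket unfolding lie_bracket_over_def by blast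
lemma br_smull: "f \<in> R \<Longrightarrow> X \<in> L \<Longrightarrow> Y \<in> L \<Longrightarrow> frame_bracket A E n (vsmul f X) Y = vsmul f (frame_bracket A E n X Y)"
  using lie_bracket unfolding lie_bracket_over_def by blast

definition "lin \<nu> \<longleftrightarrow> (\<forall>Z\<in>L. \<nu> Z \<in> L) \<and> (\<forall>f\<in>R. \<forall>Z\<in>L. \<nu> (vsmul f Z) = vsmul f (\<nu> Z)) \<and>
   (\<forall>Z\<in>L. \<forall>W\<in>L. \<nu> (vadd Z W) = vadd (\<nu> Z) (\<nu> W))"

lemma linI: "(\<And>Z. Z \<in> L \<Longrightarrow> \<nu> Z \<in> L) \<Longrightarrow> (\<And>f Z. f \<in> R \<Longrightarrow> Z \<in> L \<Longrightarrow> \<nu> (vsmul f Z) = vsmul f (\<nu> Z)) \<Longrightarrow>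
   (\<And>Z W. Z \<in> L \<Longrightarrow> W \<in> L \<Longrightarrow> \<nu> (vadd Z W) = vadd (\<nu> Z) (\<nu> W)) \<Longrightarrow> lin \<nu>"
  unfolding lin_def by blast

lemma linD: assumes "lin \<nu>"
  shows lin_L: "Z \<in> L \<Longrightarrow> \<nu> Z \<in> L"
    and lin_smul: "f \<in> R \<Longrightarrow> Z \<in> L \<Longrightarrow> \<nu> (vsmul f Z) = vsmul f (\<nu> Z)"
    and lin_add: "Z \<in> L \<Longrightarrow> W \<in> L \<Longrightarrow> \<nu> (vadd Z W) = vadd (\<nu> Z) (\<nu> W)"
  using assms unfolding lin_def by blast+

lemma vsmul_zero: "vsmul (\<lambda>x. 0) Z = vzero" by (simp add: fun_eq_iff)

lemma lin_zero: assumes "lin \<nu>" shows "\<nu> vzero = vzero"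
proof -
  have "\<nu> (vsmul (\<lambda>x. 0) vzero) = vsmul (\<lambda>x. 0) (\<nu> vzero)" by (rule lin_smul[OF assms]) auto
  then show ?thesis by (simp add: vsmul_zero)
qed

lemma lin_hat: assumes nu: "lin \<nu>" and X: "X \<in> L" shows "lin (hat_nabla vadd vsmul (weitz A E n) X \<nu>)"
proof (rule linI)
  fix Z assume "Z \<in> L" then show "hat_nabla vadd vsmul (weitz A E n) X \<nu> Z \<in> L"
    unfolding hat_nabla_def using nu X by (auto intro!: vadd_L vsmul_L lin_L[OF nu] weitz_L)
next
  fix f Z assume f: "f \<in> R" and Z: "Z \<in> L"
  have nZ: "\<nu> Z \<in> L" using nu Z by (rule lin_L)
  have a: "weitz A E n X (\<nu> (vsmul f Z)) = vadd (vsmul (X f) (\<nu> Z)) (vsmul f (weitz A E n X (\<nu> Z)))"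
    using lin_smul[OF nu f Z] weitz_leib[OF f X nZ] by simp
  have b: "\<nu> (weitz A E n X (vsmul f Z)) = vadd (vsmul (X f) (\<nu> Z)) (vsmul f (\<nu> (weitz A E n X Z)))"
    using weitz_leib[OF f X Z] lin_add[OF nu] lin_smul[OF nu] f X Z by (simp add: Lsimps)
  show "hat_nabla vadd vsmul (weitz A E n) X \<nu> (vsmul f Z) = vsmul f (hat_nabla vadd vsmul (weitz A E n) X \<nu> Z)"
    unfolding hat_nabla_def a b by (simp add: fun_eq_iff algebra_simps)
next
  fix Z W assume Z: "Z \<in> L" and W: "W \<in> L"
  have a: "weitz A E n X (\<nu> (vadd Z W)) = vadd (weitz A E n X (\<nu> Z)) (weitz A E n X (\<nu> W))"
    using lin_add[OF nu Z W] weitz_addr[OF X lin_L[OF nu Z] lin_L[OF nu W]] by simp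
  have b: "\<nu> (weitz A E n X (vadd Z W)) = vadd (\<nu> (weitz A E n X Z)) (\<nu> (weitz A E n X W))"
    using weitz_addr[OF X Z W] lin_add[OF nu] X by auto
  show "hat_nabla vadd vsmul (weitz A E n) X \<nu> (vadd Z W) = vadd (hat_nabla vadd vsmul (weitz A E n) X \<nu> Z) (hat_nabla vadd vsmul (weitz A E n) X \<nu> W)"
    unfolding hat_nabla_def a b by (simp add: fun_eq_iff algebra_simps)
qed

lemma lin_foldr: "set Xs \<subseteq> L \<Longrightarrow> lin \<nu> \<Longrightarrow> lin (foldr (hat_nabla vadd vsmul (weitz A E n)) Xs \<nu>)"
  by (induction Xs) (auto intro: lin_hat)

lemma lin_d: "Y \<in> L \<Longrightarrow> lin (\<lambda>Z. weitz A E n Z Y)"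
  by (rule linI) (auto simp: weitz_smull weitz_addl)

lemma lin_delta: assumes Y: "Y \<in> L" shows "lin (\<lambda>Z. vsmul (\<lambda>x. -1) (frame_bracket A E n Z Y))"
proof (rule linI)
  fix Z assume "Z \<in> L" then show "vsmul (\<lambda>x. -1) (frame_bracket A E n Z Y) \<in> L" using Y by auto
next
  fix f Z assume "f \<in> R" "Z \<in> L"
  then show "vsmul (\<lambda>x. -1) (frame_bracket A E n (vsmul f Z) Y) = vsmul f (vsmul (\<lambda>x. -1) (frame_bracket A E n Z Y))"
    using Y by (simp add: br_smull fun_eq_iff)
next
  fix Z W assume "Z \<in> L" "W \<in> L"
  then show "vsmul (\<lambda>x. -1) (frame_bracket A E n (vadd Z W) Y) = vadd (vsmul (\<lambda>x. -1) (frame_bracket A E n Z Y)) (vsmul (\<lambda>x. -1) (frame_bracket A E n W Y))"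
    using Y by (simp add: br_addl fun_eq_iff algebra_simps)
qed

lemma El_lin: "\<nu> \<in> El R L vadd vsmul (frame_bracket A E n) (weitz A E n) \<Longrightarrow> lin \<nu>"
proof (induction rule: El.induct)
  case (El_d Xs Y) then show ?case by (intro lin_foldr lin_d)
next
  case (El_delta Xs Y) then show ?case by (intro lin_foldr lin_delta)
next
  case El_one then show ?case by (rule linI) (auto simp: vadd_def vsmul_def)
next
  case (El_smul f u)
  show ?case
  proof (rule linI)
    fix Z assume "Z \<in> L" then show "vsmul f (u Z) \<in> L" using El_smul lin_L by blast
  next
    fix g Z assume "g \<in> R" "Z \<in> L"
    then have "u (vsmul g Z) = vsmul g (u Z)" by (rule lin_smul[OF El_smul.IH])
    then show "vsmul f (u (vsmul g Z)) = vsmul g (vsmul f (u Z))"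
      by (simp add: fun_eq_iff)
  next
    fix Z W assume "Z \<in> L" "W \<in> L"
    then have "u (vadd Z W) = vadd (u Z) (u W)" by (rule lin_add[OF El_smul.IH])
    then show "vsmul f (u (vadd Z W)) = vadd (vsmul f (u Z)) (vsmul f (u W))"
      by (simp add: fun_eq_iff algebra_simps)
  qed
next
  case (El_add u w)
  show ?case
  proof (rule linI)
    fix Z assume "Z \<in> L" then show "vadd (u Z) (w Z) \<in> L" using El_add lin_L by blast
  next
    fix g Z assume "g \<in> R" "Z \<in> L"
    then have "u (vsmul g Z) = vsmul g (u Z)" "w (vsmul g Z) = vsmul g (w Z)"
      using lin_smul[OF El_add.IH(1)] lin_smul[OF El_add.IH(2)] by blast+
    then show "vadd (u (vsmul g Z)) (w (vsmul g Z)) = vsmul g (vadd (u Z) (w Z))"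
      by (simp add: fun_eq_iff algebra_simps)
  next
    fix Z W assume "Z \<in> L" "W \<in> L"
    then have "u (vadd Z W) = vadd (u Z) (u W)" "w (vadd Z W) = vadd (w Z) (w W)"
      using lin_add[OF El_add.IH(1)] lin_add[OF El_add.IH(2)] by blast+
    then show "vadd (u (vadd Z W)) (w (vadd Z W)) = vadd (vadd (u Z) (w Z)) (vadd (u W) (w W))"
      by (simp add: fun_eq_iff algebra_simps)
  qed
next
  case (El_comp u w)
  show ?case
  proof (rule linI)
    fix Z assume "Z \<in> L" then show "(u \<circ> w) Z \<in> L" using El_comp lin_L by auto
  next
    fix g Z assume "g \<in> R" "Z \<in> L"
    then show "(u \<circ> w) (vsmul g Z) = vsmul g ((u \<circ> w) Z)"
      unfolding o_def using lin_smul[OF El_comp.IH(2)] lin_smul[OF El_comp.IH(1)] lin_L[OF El_comp.IH(2)] by metis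
  next
    fix Z W assume "Z \<in> L" "W \<in> L"
    then show "(u \<circ> w) (vadd Z W) = vadd ((u \<circ> w) Z) ((u \<circ> w) W)"
      unfolding o_def using lin_add[OF El_comp.IH(1)] lin_add[OF El_comp.IH(2)] lin_L[OF El_comp.IH(2)] by metis
  qed
qed

end

context fr begin

lemma weitz_E: "X \<in> L \<Longrightarrow> k < n \<Longrightarrow> weitz A E n X (E k) = vzero"
  by (rule coef_eqI) auto

lemma weitz_vzero_l: "weitz A E n vzero Y = vzero"
  by (simp add: weitz_def vzero_def frame_comb_def)

lemma weitz_vzero_r: "Y \<in> L \<Longrightarrow> weitz A E n Y vzero = vzero"
  by (rule coef_eqI) auto

lemma torsion_vzero_l: assumes "Y \<in> L" shows "torsion (weitz A E n) vzero Y = vzero"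
  unfolding torsion_def weitz_vzero_l weitz_vzero_r[OF assms]
  using assms by (simp add: fun_eq_iff jacobi_br_def vzero_def)

lemma torsion_vzero_r: assumes "Y \<in> L" shows "torsion (weitz A E n) Y vzero = vzero"
  unfolding torsion_def weitz_vzero_l weitz_vzero_r[OF assms]
  using assms by (simp add: fun_eq_iff jacobi_br_def vzero_def)

lemma torsion_E: assumes "i < n" "j < n" shows "torsion (weitz A E n) (E i) (E j) = vsmul (\<lambda>x. -1) (jacobi_br (E i) (E j))"
  unfolding torsion_def weitz_E[OF E_L[OF assms(1)] assms(2)] weitz_E[OF E_L[OF assms(2)] assms(1)]
  by (simp add: fun_eq_iff)

lemma cconst_from_torsion:
  assumes pt: "\<forall>X\<in>L. \<forall>Y\<in>L. \<forall>Z\<in>L.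
         weitz A E n X (torsion (weitz A E n) Y Z) =
         vadd (torsion (weitz A E n) (weitz A E n X Y) Z) (torsion (weitz A E n) Y (weitz A E n X Z))"
    and X: "X \<in> L" and i: "i < n" and j: "j < n" and m: "m < n"
  shows "X (cc i j m) = (\<lambda>p. 0)"
proof -
  have "weitz A E n X (torsion (weitz A E n) (E i) (E j)) =
         vadd (torsion (weitz A E n) (weitz A E n X (E i)) (E j)) (torsion (weitz A E n) (E i) (weitz A E n X (E j)))"
    using pt X i j by auto
  also have "\<dots> = vzero" using X i j by (simp add: weitz_E torsion_vzero_l torsion_vzero_r E_L fun_eq_iff)
  finally have "weitz A E n X (vsmul (\<lambda>x. -1) (jacobi_br (E i) (E j))) = vzero" using i j by (simp add: torsion_E)
  then have "coef (weitz A E n X (vsmul (\<lambda>x. -1) (jacobi_br (E i) (E j)))) m = (\<lambda>p. 0)" using m by simp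
  moreover have "coef (weitz A E n X (vsmul (\<lambda>x. -1) (jacobi_br (E i) (E j)))) m = X (\<lambda>p. - cc i j m p)"
    using X i j m by (simp del: coef_jacobi add: Lsimps cc_def)
  moreover have "X (\<lambda>p. - cc i j m p) = (\<lambda>p. - X (cc i j m) p)" using X i j m by (intro vf_minus) auto
  ultimately show ?thesis by (simp add: fun_eq_iff)
qed

end

context frc begin

lemma comb_split: assumes k: "k < n"
  shows "comb (\<lambda>i. if i < Suc k then x i else (\<lambda>p. 0)) = vadd (comb (\<lambda>i. if i < k then x i else (\<lambda>p. 0))) (vsmul (x k) (E k))"
proof (intro ext)
  fix f p
  have "(\<Sum>i<n. (if i < Suc k then x i else (\<lambda>p. 0)) p * E i f p)
      = (\<Sum>i<n. (if i < k then x i else (\<lambda>p. 0)) p * E i f p + (if i = k then x k p * E k f p else 0))"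
    by (intro sum.cong refl) auto
  also have "\<dots> = (\<Sum>i<n. (if i < k then x i else (\<lambda>p. 0)) p * E i f p) + x k p * E k f p"
    using k by (simp add: sum.distrib)
  finally show "comb (\<lambda>i. if i < Suc k then x i else (\<lambda>p. 0)) f p = vadd (comb (\<lambda>i. if i < k then x i else (\<lambda>p. 0))) (vsmul (x k) (E k)) f p"
    unfolding frame_comb_def by simp
qed

lemma lin_coef: assumes nu: "lin \<nu>" and Z: "Z \<in> L" and m: "m < n"
  shows "coef (\<nu> Z) m p = (\<Sum>j<n. coef Z j p * coef (\<nu> (E j)) m p)"
proof -
  define zk where "zk k = comb (\<lambda>i. if i < k then coef Z i else (\<lambda>p. 0))" for k
  have zkL: "zk k \<in> L" for k unfolding zk_def using Z by (intro comb_L) auto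
  have IH: "k \<le> n \<Longrightarrow> coef (\<nu> (zk k)) m p = (\<Sum>j<k. coef Z j p * coef (\<nu> (E j)) m p)" for k
  proof (induction k)
    case 0
    have "zk 0 = vzero" unfolding zk_def vzero_comb by simp
    then have "coef (\<nu> (zk 0)) m p = 0" using lin_zero[OF nu] coef_vzero[OF m] by metis
    then show ?case by simp
  next
    case (Suc k)
    then have k: "k < n" by simp
    have "zk (Suc k) = vadd (zk k) (vsmul (coef Z k) (E k))" unfolding zk_def by (rule comb_split[OF k])
    then have "\<nu> (zk (Suc k)) = vadd (\<nu> (zk k)) (vsmul (coef Z k) (\<nu> (E k)))"
      using lin_add[OF nu zkL] lin_smul[OF nu] Z k by (simp add: Lsimps)
    then have "coef (\<nu> (zk (Suc k))) m p = coef (\<nu> (zk k)) m p + coef Z k p * coef (\<nu> (E k)) m p"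
      using lin_L[OF nu] zkL Z k m by (simp add: Lsimps)
    then show ?case using Suc by simp
  qed
  have "zk n = Z" unfolding zk_def
    by (subst comb_coef[OF Z, symmetric]) (rule comb_cong, simp)
  then show ?thesis using IH[of n] by simp
qed

lemma tracial: "tracial R L vadd vsmul (frame_bracket A E n) (\<lambda>X \<phi>. X \<phi>) (weitz A E n) (frame_trace A E n)"
  unfolding tracial_def Let_def
proof (intro conjI ballI)
  fix \<nu> assume "\<nu> \<in> El R L vadd vsmul (frame_bracket A E n) (weitz A E n)"
  then have nu: "lin \<nu>" by (rule El_lin)
  show "frame_trace A E n \<nu> \<in> R" unfolding frame_trace_def
    by (intro R_sum_lt coef_R lin_L[OF nu] E_L)
next
  fix f g \<nu> \<mu> assume f: "f \<in> R" and g: "g \<in> R"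
    and "\<nu> \<in> El R L vadd vsmul (frame_bracket A E n) (weitz A E n)" "\<mu> \<in> El R L vadd vsmul (frame_bracket A E n) (weitz A E n)"
  then have nu: "lin \<nu>" and mu: "lin \<mu>" by (auto intro: El_lin)
  show "frame_trace A E n (\<lambda>Z. vadd (vsmul f (\<nu> Z)) (vsmul g (\<mu> Z))) = (\<lambda>x. f x * frame_trace A E n \<nu> x + g x * frame_trace A E n \<mu> x)"
    unfolding frame_trace_def
  proof (intro ext)
    fix p
    have "(\<Sum>i<n. coef (vadd (vsmul f (\<nu> (E i))) (vsmul g (\<mu> (E i)))) i p) = (\<Sum>i<n. f p * coef (\<nu> (E i)) i p + g p * coef (\<mu> (E i)) i p)"
      by (intro sum.cong refl) (use f g nu mu in \<open>auto simp: Lsimps lin_L\<close>)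
    then show "(\<Sum>i<n. coef (vadd (vsmul f (\<nu> (E i))) (vsmul g (\<mu> (E i)))) i p) = f p * (\<Sum>i<n. coef (\<nu> (E i)) i p) + g p * (\<Sum>i<n. coef (\<mu> (E i)) i p)"
      by (simp add: sum.distrib sum_distrib_left)
  qed
next
  fix X \<nu> assume X: "X \<in> L" and "\<nu> \<in> El R L vadd vsmul (frame_bracket A E n) (weitz A E n)"
  then have nu: "lin \<nu>" by (auto intro: El_lin)
  have "frame_trace A E n (hat_nabla vadd vsmul (weitz A E n) X \<nu>) = (\<lambda>p. \<Sum>i<n. X (coef (\<nu> (E i)) i) p)"
    unfolding frame_trace_def hat_nabla_def
  proof (rule ext, rule sum.cong[OF refl])
    fix p i assume i: "i \<in> {..<n}"
    then have i': "i < n" by simp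
    have z: "\<nu> (weitz A E n X (E i)) = vzero" using weitz_E[OF X i'] lin_zero[OF nu] by simp
    have a: "coef (vadd (weitz A E n X (\<nu> (E i))) (vsmul (\<lambda>x. -1) vzero)) i =
       (\<lambda>p. coef (weitz A E n X (\<nu> (E i))) i p + coef (vsmul (\<lambda>x. -1) vzero) i p)"
      by (rule coef_vadd[OF weitz_L[OF X] vsmul_L[OF R_const vzero_L] i'])
    have b: "coef (vsmul (\<lambda>x. -1) vzero) i = (\<lambda>p. -1 * coef vzero i p)"
      by (rule coef_vsmul[OF R_const vzero_L i'])
    show "coef (vadd (weitz A E n X (\<nu> (E i))) (vsmul (\<lambda>x. -1) (\<nu> (weitz A E n X (E i))))) i p = X (coef (\<nu> (E i)) i) p"
      unfolding z a b coef_weitz[OF X i'] coef_vzero[OF i'] by simp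
  qed
  also have "\<dots> = X (\<lambda>p. \<Sum>i<n. coef (\<nu> (E i)) i p)"
    by (rule vf_sum_lt[OF X, symmetric]) (intro coef_R lin_L[OF nu] E_L, assumption+)
  finally show "frame_trace A E n (hat_nabla vadd vsmul (weitz A E n) X \<nu>) = X (frame_trace A E n \<nu>)"
    unfolding frame_trace_def .
next
  fix \<nu> \<mu> assume "\<nu> \<in> El R L vadd vsmul (frame_bracket A E n) (weitz A E n)" "\<mu> \<in> El R L vadd vsmul (frame_bracket A E n) (weitz A E n)"
  then have nu: "lin \<nu>" and mu: "lin \<mu>" by (auto intro: El_lin)
  show "frame_trace A E n (\<nu> \<circ> \<mu>) = frame_trace A E n (\<mu> \<circ> \<nu>)"
    unfolding frame_trace_def
  proof (intro ext)
    fix p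
    define a where "a i j = coef (\<mu> (E i)) j p" for i j
    define b where "b i j = coef (\<nu> (E i)) j p" for i j
    have "(\<Sum>i<n. coef ((\<nu> \<circ> \<mu>) (E i)) i p) = (\<Sum>i<n. \<Sum>j<n. a i j * b j i)"
      unfolding a_def b_def o_def
    proof (rule sum.cong[OF refl])
      fix i assume "i \<in> {..<n}" then have i: "i < n" by simp
      show "coef (\<nu> (\<mu> (E i))) i p = (\<Sum>j<n. coef (\<mu> (E i)) j p * coef (\<nu> (E j)) i p)"
        by (rule lin_coef[OF nu lin_L[OF mu E_L[OF i]] i])
    qed
    moreover have "(\<Sum>i<n. coef ((\<mu> \<circ> \<nu>) (E i)) i p) = (\<Sum>i<n. \<Sum>j<n. b i j * a j i)"
      unfolding a_def b_def o_def
    proof (rule sum.cong[OF refl])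
      fix i assume "i \<in> {..<n}" then have i: "i < n" by simp
      show "coef (\<mu> (\<nu> (E i))) i p = (\<Sum>j<n. coef (\<nu> (E i)) j p * coef (\<mu> (E j)) i p)"
        by (rule lin_coef[OF mu lin_L[OF nu E_L[OF i]] i])
    qed
    moreover have "(\<Sum>i<n. \<Sum>j<n. b i j * a j i) = (\<Sum>j<n. \<Sum>i<n. b i j * a j i)" by (rule sum.swap)
    moreover have "(\<Sum>j<n. \<Sum>i<n. b i j * a j i) = (\<Sum>i<n. \<Sum>j<n. a i j * b j i)" by (simp add: mult.commute)
    ultimately show "(\<Sum>i<n. coef ((\<nu> \<circ> \<mu>) (E i)) i p) = (\<Sum>i<n. coef ((\<mu> \<circ> \<nu>) (E i)) i p)" by simp
  qed
qed

lemma post_LR: "post_Lie_Rinehart R L vadd vzero vsmul (frame_bracket A E n) (\<lambda>X \<phi>. X \<phi>) (weitz A E n)"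
  unfolding post_Lie_Rinehart_def Let_def
proof (intro conjI comm_R module lie_bracket anchor connection)
  show "Lie_Rinehart R L vadd vzero vsmul
     (\<lambda>X Y. vadd (frame_bracket A E n X Y) (vadd (weitz A E n X Y) (vsmul (\<lambda>x. -1) (weitz A E n Y X)))) (\<lambda>X \<phi>. X \<phi>)"
    by (rule LR_cong[OF _ LR_jacobi]) (rule jb_eq)
  show "\<forall>X\<in>L. \<forall>Y\<in>L. \<forall>Z\<in>L.
       weitz A E n (vadd (frame_bracket A E n X Y) (vadd (weitz A E n X Y) (vsmul (\<lambda>x. -1) (weitz A E n Y X)))) Z =
       vadd (weitz A E n X (weitz A E n Y Z)) (vsmul (\<lambda>x. -1) (weitz A E n Y (weitz A E n X Z)))"
    by (intro ballI) (simp only: jb_eq flat)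
  show "\<forall>X\<in>L. \<forall>Y\<in>L. \<forall>Z\<in>L.
       weitz A E n X (frame_bracket A E n Y Z) =
       vadd (frame_bracket A E n (weitz A E n X Y) Z) (frame_bracket A E n Y (weitz A E n X Z))"
    by (intro ballI parallel)
qed

end

theorem proposition6p1:
  fixes A :: "('m::{t2_space, second_countable_topology} set \<times> ('m \<Rightarrow> 'e::euclidean_space)) set"
    and E :: "nat \<Rightarrow> 'm vf" and n :: nat
  assumes atlas: "smooth_atlas A"
    and frame: "global_frame A E n"
    and parallel_torsion:
      "\<forall>X\<in>vector_fields A. \<forall>Y\<in>vector_fields A. \<forall>Z\<in>vector_fields A.
         weitz A E n X (torsion (weitz A E n) Y Z) =
         vadd (torsion (weitz A E n) (weitz A E n X Y) Z) (torsion (weitz A E n) Y (weitz A E n X Z))"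
  shows "post_Lie_Rinehart (smooth_funs A) (vector_fields A) vadd vzero vsmul
           (frame_bracket A E n) (\<lambda>X \<phi>. X \<phi>) (weitz A E n)
       \<and> tracial (smooth_funs A) (vector_fields A) vadd vsmul
           (frame_bracket A E n) (\<lambda>X \<phi>. X \<phi>) (weitz A E n) (frame_trace A E n)"
proof -
  interpret fr A E n by (rule fr.intro[OF atlas frame])
  interpret frc A E n
    by (rule frc.intro[OF fr_axioms], unfold frc_axioms_def, intro allI impI, rule cconst_from_torsion[OF parallel_torsion])
  show ?thesis using post_LR tracial by blast
qed


end
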